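(* Let $p$ be an odd prime and $r\ge3$ with $p\nmid r$. Let $\mathcal{M}_1,\dots,\mathcal{M}_m,\mathcal{N}_1,\dots,\mathcal{N}_n$ be irreducible rotary augmented PX maps of length $r$ such that $\mathcal{M}_i\not\cong\mathcal{M}_j$ and $\mathcal{N}_i\not\cong\mathcal{N}_j$ for $i\ne j$. Then $\mathcal{M}_1\times\cdots\times\mathcal{M}_m\cong\mathcal{N}_1\times\cdots\times\mathcal{N}_n$ if and only if $m=n$ and there is a permutation $\sigma$ of $\{1,\dots,n\}$ with $\mathcal{M}_i\cong\mathcal{N}_{\sigma(i)}$ for all $i$.
   Context: A map is a 2-cell embedding of a connected graph (multiple edges allowed, no loops) in a closed orientable surface; it is rotary if its orientation-preserving automorphism group $G$ is arc-transitive, in which case it is isomorphic to $\mathsf{RotaMap}(G,\rho,\tau)$ for some $\rho,\tau$ with $G=\langle\rho,\tau\rangle$, $|\tau|=2$; here $\mathsf{RotaMap}(G,\rho,\tau)$ has vertices, edges, faces the left cosets of $\langle\rho\rangle,\langle\tau\rangle,\langle\rho\tau\rangle$, incidence being nonempty intersection. Direct product: for $\mathcal{M}_i=\mathsf{RotaMap}(G_i,\rho_i,\tau_i)$ and $H=\langle(\rho_1,\dots,\rho_n),(\tau_1,\dots,\tau_n)\rangle\le\prod G_i$, $\prod\mathcal{M}_i=\mathsf{RotaMap}(H,(\rho_i)_i,(\tau_i)_i)$. Augmented PX graph of length $r$: for $s\ge1$, the graph with vertex set $\mathbb{Z}_r\times\mathbb{Z}_p^s$ and edges $\{(i,x_0,\dots,x_{s-1}),(i+1,x_1,\dots,x_s)\}$;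 the cycle of length $r$ with $p$ parallel edges between adjacent vertices; or the cycle $\mathrm{C}_{pr}$. An augmented PX map of length $r$ is a map with such an underlying graph; a rotary one is irreducible if its arc-regular orientation-preserving automorphism group is isomorphic to $\mathbb{Z}_p^d\rtimes_\psi\mathrm{D}_{2r}$ with $\psi$ irreducible over $\mathbb{F}_p$. *)

theory Defs
  imports "HOL-Algebra.Algebra" "HOL-Computational_Algebra.Primes"
begin

text \<open>A rotary map is given by a presentation (G, rho, tau); the map RotaMap(G,rho,tau).\<close>
type_synonym 'a rmap = "'a monoid \<times> 'a \<times> 'a"

text \<open>(G, rho, tau) presents a rotary map: G finite group generated by rho, tau,
  tau an involution, and no loops (tau not in the vertex stabiliser generated by rho).\<close>
definition rotary_datum :: "'a rmap \<Rightarrow> bool" where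
  "rotary_datum M = (case M of (G, \<rho>, \<tau>) \<Rightarrow>
     group G \<and> finite (carrier G) \<and> \<rho> \<in> carrier G \<and> \<tau> \<in> carrier G \<and>
     generate G {\<rho>, \<tau>} = carrier G \<and> \<tau> \<noteq> \<one>\<^bsub>G\<^esub> \<and> \<tau> \<otimes>\<^bsub>G\<^esub> \<tau> = \<one>\<^bsub>G\<^esub> \<and>
     \<tau> \<notin> generate G {\<rho>})"

text \<open>Oriented (dart) maps: darts, rotation R, edge involution L.
  Isomorphism = orientation-preserving map isomorphism.\<close>
type_synonym 'a omap = "'a set \<times> ('a \<Rightarrow> 'a) \<times> ('a \<Rightarrow> 'a)"

definition omap_iso :: "'a omap \<Rightarrow> 'b omap \<Rightarrow> bool" where
  "omap_iso A B = (case A of (D, R, L) \<Rightarrow> case B of (D', R', L') \<Rightarrow>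
     (\<exists>f. bij_betw f D D' \<and> (\<forall>x\<in>D. f (R x) = R' (f x) \<and> f (L x) = L' (f x))))"

text \<open>RotaMap(G,rho,tau): arcs are the elements of G; arc g lies at vertex g<rho> on edge g<tau>;
  the next arc around the vertex is g rho, the reverse arc is g tau.\<close>
definition RotaMap :: "'a rmap \<Rightarrow> 'a omap" where
  "RotaMap M = (case M of (G, \<rho>, \<tau>) \<Rightarrow>
     (carrier G, (\<lambda>g. g \<otimes>\<^bsub>G\<^esub> \<rho>), (\<lambda>g. g \<otimes>\<^bsub>G\<^esub> \<tau>)))"

definition rmap_iso :: "'a rmap \<Rightarrow> 'b rmap \<Rightarrow> bool" where
  "rmap_iso M N = omap_iso (RotaMap M) (RotaMap N)"

type_synonym ('v, 'e) mgraph = "'v set \<times> 'e set \<times> ('e \<Rightarrow> 'v set)"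

definition mgraph_iso :: "('v, 'e) mgraph \<Rightarrow> ('w, 'f) mgraph \<Rightarrow> bool" where
  "mgraph_iso A B = (case A of (V, E, en) \<Rightarrow> case B of (V', E', en') \<Rightarrow>
     (\<exists>\<phi> \<psi>. bij_betw \<phi> V V' \<and> bij_betw \<psi> E E' \<and> (\<forall>e\<in>E. en' (\<psi> e) = \<phi> ` en e)))"

definition ugraph :: "'a rmap \<Rightarrow> ('a set, 'a set) mgraph" where
  "ugraph M = (case M of (G, \<rho>, \<tau>) \<Rightarrow>
     (let V = (\<Union>g\<in>carrier G. {g <#\<^bsub>G\<^esub> generate G {\<rho>}});
          E = (\<Union>g\<in>carrier G. {g <#\<^bsub>G\<^esub> generate G {\<tau>}})
      in (V, E, (\<lambda>e. {v \<in> V. v \<inter> e \<noteq> {}}))))"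

text \<open>Augmented PX graph with parameters p, r, s (Z_r as {0..<r}, Z_p^s as lists of
  length s with entries < p).
  For s = 0 this is the r-cycle with p parallel edges between adjacent vertices.\<close>
definition PX_graph :: "nat \<Rightarrow> nat \<Rightarrow> nat \<Rightarrow> (nat \<times> nat list, nat \<times> nat list) mgraph" where
  "PX_graph p r s =
     ({(i, xs). i < r \<and> length xs = s \<and> set xs \<subseteq> {..<p}},
      {(i, xs). i < r \<and> length xs = Suc s \<and> set xs \<subseteq> {..<p}},
      (\<lambda>(i, xs). {(i, take s xs), (Suc i mod r, drop 1 xs)}))"

definition cycle_graph :: "nat \<Rightarrow> (nat, nat) mgraph" where
  "cycle_graph k = ({..<k}, {..<k}, (\<lambda>j. {j, Suc j mod k}))"

definition augmented_PX_map :: "nat \<Rightarrow> nat \<Rightarrow> 'a rmap \<Rightarrow> bool" where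
  "augmented_PX_map p r M =
     (rotary_datum M \<and>
      ((\<exists>s. mgraph_iso (ugraph M) (PX_graph p r s)) \<or> mgraph_iso (ugraph M) (cycle_graph (p * r))))"

text \<open>Dihedral group of order 2r: (i,False) = x^i, (i,True) = x^i y.\<close>
definition dihedral_group :: "nat \<Rightarrow> (nat \<times> bool) monoid" where
  "dihedral_group r =
     \<lparr>carrier = {..<r} \<times> UNIV,
      monoid.mult = (\<lambda>(i, s) (j, t). ((if s then i + (r - j) else i + j) mod r, s \<noteq> t)),
      one = (0, False)\<rparr>"

text \<open>G is isomorphic to Z_p^d semidirect_psi D_2r with psi irreducible over F_p (d >= 1):
  internally, G = K D with K an elementary abelian p-subgroup normal in G, D a complement
  isomorphic to D_2r, and K has no G-invariant subgroup (= F_p D-submodule) other than 1, K.\<close>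
definition irreducible_PX_group :: "nat \<Rightarrow> nat \<Rightarrow> 'a monoid \<Rightarrow> bool" where
  "irreducible_PX_group p r G =
     (\<exists>K D. K \<lhd> G \<and> K \<noteq> {\<one>\<^bsub>G\<^esub>} \<and>
        (\<forall>x\<in>K. \<forall>y\<in>K. x \<otimes>\<^bsub>G\<^esub> y = y \<otimes>\<^bsub>G\<^esub> x) \<and>
        (\<forall>x\<in>K. x [^]\<^bsub>G\<^esub> p = \<one>\<^bsub>G\<^esub>) \<and>
        subgroup D G \<and> K \<inter> D = {\<one>\<^bsub>G\<^esub>} \<and> K <#>\<^bsub>G\<^esub> D = carrier G \<and>
        G\<lparr>carrier := D\<rparr> \<cong> dihedral_group r \<and>
        (\<forall>L. L \<lhd> G \<longrightarrow> L \<subseteq> K \<longrightarrow> L = {\<one>\<^bsub>G\<^esub>} \<or> L = K))"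

definition irreducible_rotary_augmented_PX_map :: "nat \<Rightarrow> nat \<Rightarrow> 'a rmap \<Rightarrow> bool" where
  "irreducible_rotary_augmented_PX_map p r M =
     (augmented_PX_map p r M \<and> irreducible_PX_group p r (fst M))"

definition rmap_prod :: "nat \<Rightarrow> (nat \<Rightarrow> 'a rmap) \<Rightarrow> (nat \<Rightarrow> 'a) rmap" where
  "rmap_prod m M =
     (let P = product_group {..<m} (\<lambda>i. fst (M i));
          \<rho> = (\<lambda>i\<in>{..<m}. fst (snd (M i)));
          \<tau> = (\<lambda>i\<in>{..<m}. snd (snd (M i)))
      in (P\<lparr>carrier := generate P {\<rho>, \<tau>}\<rparr>, \<rho>, \<tau>))"

end

theory Submission
  imports Defs
begin

type_synonym wrd = "(bool \<times> bool) list"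

definition letter :: "('a, 'm) monoid_scheme \<Rightarrow> 'a \<Rightarrow> 'a \<Rightarrow> bool \<times> bool \<Rightarrow> 'a" where
  "letter G a b c = (if fst c then (if snd c then inv\<^bsub>G\<^esub> b else b) else (if snd c then inv\<^bsub>G\<^esub> a else a))"

fun ev :: "('a, 'm) monoid_scheme \<Rightarrow> 'a \<Rightarrow> 'a \<Rightarrow> wrd \<Rightarrow> 'a" where
  "ev G a b [] = \<one>\<^bsub>G\<^esub>"
| "ev G a b (c # w) = letter G a b c \<otimes>\<^bsub>G\<^esub> ev G a b w"

definition winv :: "wrd \<Rightarrow> wrd" where
  "winv w = rev (map (\<lambda>c. (fst c, \<not> snd c)) w)"

definition rel :: "('a, 'm) monoid_scheme \<Rightarrow> 'a \<Rightarrow> 'a \<Rightarrow> wrd set" where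
  "rel G a b = {w. ev G a b w = \<one>\<^bsub>G\<^esub>}"

context group
begin

lemma letter_closed: "a \<in> carrier G \<Longrightarrow> b \<in> carrier G \<Longrightarrow> letter G a b c \<in> carrier G"
  by (auto simp: letter_def)

lemma ev_closed: "a \<in> carrier G \<Longrightarrow> b \<in> carrier G \<Longrightarrow> ev G a b w \<in> carrier G"
  by (induction w) (auto simp: letter_closed)

lemma ev_append: "a \<in> carrier G \<Longrightarrow> b \<in> carrier G \<Longrightarrow> ev G a b (w1 @ w2) = ev G a b w1 \<otimes> ev G a b w2"
  by (induction w1) (auto simp: letter_closed ev_closed m_assoc)

lemma letter_inv: "a \<in> carrier G \<Longrightarrow> b \<in> carrier G \<Longrightarrow> letter G a b (fst c, \<not> snd c) = inv (letter G a b c)"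
  by (auto simp: letter_def)

lemma ev_winv: "a \<in> carrier G \<Longrightarrow> b \<in> carrier G \<Longrightarrow> ev G a b (winv w) = inv (ev G a b w)"
proof (induction w)
  case Nil then show ?case by (simp add: winv_def)
next
  case (Cons c w)
  have "ev G a b (winv (c # w)) = ev G a b (winv w @ [(fst c, \<not> snd c)])"
    by (simp add: winv_def)
  also have "\<dots> = inv (ev G a b w) \<otimes> inv (letter G a b c)"
    using Cons by (simp add: ev_append letter_inv letter_closed)
  also have "\<dots> = inv (letter G a b c \<otimes> ev G a b w)"
    using Cons by (simp add: inv_mult_group letter_closed ev_closed)
  finally show ?case by simp
qed

lemma ev_single_a: "a \<in> carrier G \<Longrightarrow> ev G a b [(False, False)] = a"
  by (simp add: letter_def)
lemma ev_single_b: "b \<in> carrier G \<Longrightarrow> ev G a b [(True, False)] = b"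
  by (simp add: letter_def)

lemma generate_ev:
  assumes "a \<in> carrier G" "b \<in> carrier G"
  shows "generate G {a, b} = range (ev G a b)"
proof
  show "generate G {a, b} \<subseteq> range (ev G a b)"
  proof
    fix x assume "x \<in> generate G {a, b}"
    then show "x \<in> range (ev G a b)"
    proof induction
      case one
      then show ?case by (metis ev.simps(1) rangeI)
    next
      case (incl h)
      then show ?case using assms
        by (metis empty_iff ev_single_a ev_single_b insert_iff rangeI)
    next
      case (inv h)
      then have "h \<in> range (ev G a b)" using assms
        by (metis empty_iff ev_single_a ev_single_b insert_iff rangeI)
      then obtain w where "h = ev G a b w" by auto
      then have "inv h = ev G a b (winv w)" using assms by (simp add: ev_winv)
      then show ?case by simp
    next
      case (eng h1 h2)
      then obtain w1 w2 where "h1 = ev G a b w1" "h2 = ev G a b w2" by auto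
      then have "h1 \<otimes> h2 = ev G a b (w1 @ w2)" using assms by (simp add: ev_append)
      then show ?case by simp
    qed
  qed
next
  show "range (ev G a b) \<subseteq> generate G {a, b}"
  proof
    fix x assume "x \<in> range (ev G a b)"
    then obtain w where x: "x = ev G a b w" by auto
    have "ev G a b w \<in> generate G {a, b}"
    proof (induction w)
      case Nil then show ?case by (simp add: generate.one)
    next
      case (Cons c w)
      have "letter G a b c \<in> generate G {a, b}"
        by (auto simp: letter_def intro: generate.incl generate.inv)
      then show ?case using Cons by (simp add: generate.eng)
    qed
    then show "x \<in> generate G {a, b}" using x by simp
  qed
qed

lemma ev_eq_iff:
  assumes "a \<in> carrier G" "b \<in> carrier G"
  shows "ev G a b w1 = ev G a b w2 \<longleftrightarrow> ev G a b (winv w2 @ w1) = \<one>"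
  using assms by (simp add: ev_append ev_winv ev_closed)
    (metis ev_closed inv_closed inv_inv l_inv r_one group.inv_equality is_group)

end

lemma hom_ev:
  assumes "group G" "group G'" "h \<in> hom G G'" "a \<in> carrier G" "b \<in> carrier G"
  shows "h (ev G a b w) = ev G' (h a) (h b) w"
proof (induction w)
  case Nil then show ?case using assms by (simp add: hom_one)
next
  case (Cons c w)
  interpret gh: group_hom G G' h using assms by (simp add: group_hom.intro group_hom_axioms.intro)
  have "h (letter G a b c) = letter G' (h a) (h b) c"
    using assms by (auto simp: letter_def)
  then show ?case using Cons assms by (simp add: group.letter_closed group.ev_closed)
qed

definition wgen :: "('a, 'm) monoid_scheme \<Rightarrow> 'a \<Rightarrow> 'a \<Rightarrow> bool" where
  "wgen G a b \<longleftrightarrow> group G \<and> a \<in> carrier G \<and> b \<in> carrier G \<and> carrier G = range (ev G a b)"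

lemma rel_eq_ev_iff:
  assumes "wgen G a b" "wgen G' a' b'" "rel G a b \<subseteq> rel G' a' b'"
  shows "ev G a b w1 = ev G a b w2 \<Longrightarrow> ev G' a' b' w1 = ev G' a' b' w2"
  using assms group.ev_eq_iff[of G a b] group.ev_eq_iff[of G' a' b']
  unfolding wgen_def rel_def by blast

lemma iso_imp_rel:
  assumes wg: "wgen G a b" "wgen G' a' b'" and iso: "rmap_iso (G, a, b) (G', a', b')"
  shows "rel G a b = rel G' a' b'"
proof -
  interpret G: group G using wg by (simp add: wgen_def)
  interpret G': group G' using wg by (simp add: wgen_def)
  have a: "a \<in> carrier G" "b \<in> carrier G" "a' \<in> carrier G'" "b' \<in> carrier G'" using wg by (auto simp: wgen_def)
  obtain f where bij: "bij_betw f (carrier G) (carrier G')"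
    and fa: "\<And>x. x \<in> carrier G \<Longrightarrow> f (x \<otimes>\<^bsub>G\<^esub> a) = f x \<otimes>\<^bsub>G'\<^esub> a'"
    and fb: "\<And>x. x \<in> carrier G \<Longrightarrow> f (x \<otimes>\<^bsub>G\<^esub> b) = f x \<otimes>\<^bsub>G'\<^esub> b'"
    using iso by (auto simp: rmap_iso_def omap_iso_def RotaMap_def)
  have fcl: "\<And>x. x \<in> carrier G \<Longrightarrow> f x \<in> carrier G'" using bij by (auto simp: bij_betw_def)
  have fai: "f (x \<otimes>\<^bsub>G\<^esub> inv\<^bsub>G\<^esub> a) = f x \<otimes>\<^bsub>G'\<^esub> inv\<^bsub>G'\<^esub> a'" if x: "x \<in> carrier G" for x
  proof -
    have "f x = f (x \<otimes>\<^bsub>G\<^esub> inv\<^bsub>G\<^esub> a) \<otimes>\<^bsub>G'\<^esub> a'"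
      using fa[of "x \<otimes>\<^bsub>G\<^esub> inv\<^bsub>G\<^esub> a"] x a by (simp add: G.m_assoc)
    then show ?thesis using x a fcl by (simp add: G'.m_assoc)
  qed
  have fbi: "f (x \<otimes>\<^bsub>G\<^esub> inv\<^bsub>G\<^esub> b) = f x \<otimes>\<^bsub>G'\<^esub> inv\<^bsub>G'\<^esub> b'" if x: "x \<in> carrier G" for x
  proof -
    have "f x = f (x \<otimes>\<^bsub>G\<^esub> inv\<^bsub>G\<^esub> b) \<otimes>\<^bsub>G'\<^esub> b'"
      using fb[of "x \<otimes>\<^bsub>G\<^esub> inv\<^bsub>G\<^esub> b"] x a by (simp add: G.m_assoc)
    then show ?thesis using x a fcl by (simp add: G'.m_assoc)
  qed
  have fl: "f (x \<otimes>\<^bsub>G\<^esub> letter G a b c) = f x \<otimes>\<^bsub>G'\<^esub> letter G' a' b' c" if "x \<in> carrier G" for x c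
    using that fa fb fai fbi by (auto simp: letter_def)
  have fw: "\<And>x. x \<in> carrier G \<Longrightarrow> f (x \<otimes>\<^bsub>G\<^esub> ev G a b w) = f x \<otimes>\<^bsub>G'\<^esub> ev G' a' b' w" for w
  proof (induction w)
    case Nil then show ?case using fcl by simp
  next
    case (Cons c w)
    have "f (x \<otimes>\<^bsub>G\<^esub> ev G a b (c # w)) = f ((x \<otimes>\<^bsub>G\<^esub> letter G a b c) \<otimes>\<^bsub>G\<^esub> ev G a b w)"
      using Cons a by (simp add: G.m_assoc G.letter_closed G.ev_closed)
    also have "\<dots> = f (x \<otimes>\<^bsub>G\<^esub> letter G a b c) \<otimes>\<^bsub>G'\<^esub> ev G' a' b' w"
      using Cons a by (simp add: G.letter_closed)
    also have "\<dots> = f x \<otimes>\<^bsub>G'\<^esub> ev G' a' b' (c # w)"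
      using Cons a fl fcl by (simp add: G'.m_assoc G'.letter_closed G'.ev_closed)
    finally show ?case .
  qed
  have inj: "inj_on f (carrier G)" using bij by (simp add: bij_betw_def)
  show ?thesis
  proof (rule equalityI; rule subsetI)
    fix w assume "w \<in> rel G a b"
    then have e: "ev G a b w = \<one>\<^bsub>G\<^esub>" by (simp add: rel_def)
    have "f (\<one>\<^bsub>G\<^esub> \<otimes>\<^bsub>G\<^esub> ev G a b w) = f \<one>\<^bsub>G\<^esub> \<otimes>\<^bsub>G'\<^esub> ev G' a' b' w"
      by (rule fw) simp
    moreover have "f (\<one>\<^bsub>G\<^esub> \<otimes>\<^bsub>G\<^esub> ev G a b w) = f \<one>\<^bsub>G\<^esub> \<otimes>\<^bsub>G'\<^esub> \<one>\<^bsub>G'\<^esub>"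
      using e fcl by simp
    ultimately have "ev G' a' b' w = \<one>\<^bsub>G'\<^esub>"
      using fcl a G'.l_cancel G'.ev_closed by (metis G.one_closed G'.one_closed)
    then show "w \<in> rel G' a' b'" by (simp add: rel_def)
  next
    fix w assume "w \<in> rel G' a' b'"
    then have "ev G' a' b' w = \<one>\<^bsub>G'\<^esub>" by (simp add: rel_def)
    then have "f (\<one>\<^bsub>G\<^esub> \<otimes>\<^bsub>G\<^esub> ev G a b w) = f \<one>\<^bsub>G\<^esub>"
      using fw[of "\<one>\<^bsub>G\<^esub>"] fcl by simp
    then have "ev G a b w = \<one>\<^bsub>G\<^esub>"
      using inj a G.ev_closed by (simp add: inj_on_def)
    then show "w \<in> rel G a b" by (simp add: rel_def)
  qed
qed

lemma rel_imp_iso: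
  assumes wg: "wgen G a b" "wgen G' a' b'" and r: "rel G a b = rel G' a' b'"
  shows "rmap_iso (G, a, b) (G', a', b')"
proof -
  interpret G: group G using wg by (simp add: wgen_def)
  interpret G': group G' using wg by (simp add: wgen_def)
  have a: "a \<in> carrier G" "b \<in> carrier G" "a' \<in> carrier G'" "b' \<in> carrier G'" using wg by (auto simp: wgen_def)
  have cG: "carrier G = range (ev G a b)" and cG': "carrier G' = range (ev G' a' b')"
    using wg by (auto simp: wgen_def)
  have eqv: "ev G a b w1 = ev G a b w2 \<longleftrightarrow> ev G' a' b' w1 = ev G' a' b' w2" for w1 w2
    using rel_eq_ev_iff[OF wg(1) wg(2)] rel_eq_ev_iff[OF wg(2) wg(1)] r by blast
  define f where "f g = ev G' a' b' (SOME w. g = ev G a b w)" for g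
  have fev: "f (ev G a b w) = ev G' a' b' w" for w
  proof -
    have "ev G a b w = ev G a b (SOME w'. ev G a b w = ev G a b w')"
      by (rule someI_ex) auto
    then show ?thesis unfolding f_def using eqv by metis
  qed
  have bij: "bij_betw f (carrier G) (carrier G')"
  proof (rule bij_betw_imageI)
    show "inj_on f (carrier G)"
      unfolding cG by (auto simp: inj_on_def fev eqv)
    show "f ` carrier G = carrier G'"
      unfolding cG cG' by (auto simp: fev image_iff)
  qed
  have "\<forall>x\<in>carrier G. f (x \<otimes>\<^bsub>G\<^esub> a) = f x \<otimes>\<^bsub>G'\<^esub> a' \<and> f (x \<otimes>\<^bsub>G\<^esub> b) = f x \<otimes>\<^bsub>G'\<^esub> b'"
  proof
    fix x assume "x \<in> carrier G"
    then obtain w where x: "x = ev G a b w" using cG by auto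
    have "x \<otimes>\<^bsub>G\<^esub> a = ev G a b (w @ [(False, False)])"
      using x a by (simp add: G.ev_append letter_def)
    moreover have "x \<otimes>\<^bsub>G\<^esub> b = ev G a b (w @ [(True, False)])"
      using x a by (simp add: G.ev_append letter_def)
    ultimately show "f (x \<otimes>\<^bsub>G\<^esub> a) = f x \<otimes>\<^bsub>G'\<^esub> a' \<and> f (x \<otimes>\<^bsub>G\<^esub> b) = f x \<otimes>\<^bsub>G'\<^esub> b'"
      using x a by (simp add: fev G'.ev_append letter_def)
  qed
  then show ?thesis using bij
    unfolding rmap_iso_def omap_iso_def RotaMap_def by auto
qed

lemma rmap_iso_iff_rel:
  assumes "wgen G a b" "wgen G' a' b'"
  shows "rmap_iso (G, a, b) (G', a', b') \<longleftrightarrow> rel G a b = rel G' a' b'"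
  using iso_imp_rel[OF assms] rel_imp_iso[OF assms] by blast

lemma ev_product:
  assumes "\<And>i. i \<in> I \<Longrightarrow> group (G i)" "a \<in> (\<Pi>\<^sub>E i\<in>I. carrier (G i))" "b \<in> (\<Pi>\<^sub>E i\<in>I. carrier (G i))"
  shows "ev (product_group I G) a b w = (\<lambda>i\<in>I. ev (G i) (a i) (b i) w)"
proof (induction w)
  case Nil then show ?case by simp
next
  case (Cons c w)
  have l: "letter (product_group I G) a b c = (\<lambda>i\<in>I. letter (G i) (a i) (b i) c)"
    using assms by (auto simp: letter_def)
  show ?case using Cons by (auto simp: l fun_eq_iff)
qed

lemma rmap_prod_props:
  assumes wg: "\<And>i. i < m \<Longrightarrow> wgen (fst (M i)) (fst (snd (M i))) (snd (snd (M i)))"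
  shows "wgen (fst (rmap_prod m M)) (fst (snd (rmap_prod m M))) (snd (snd (rmap_prod m M)))"
    and "rel (fst (rmap_prod m M)) (fst (snd (rmap_prod m M))) (snd (snd (rmap_prod m M))) =
           {w. \<forall>i<m. w \<in> rel (fst (M i)) (fst (snd (M i))) (snd (snd (M i)))}"
proof -
  define G where "G i = fst (M i)" for i
  define a where "a = (\<lambda>i\<in>{..<m}. fst (snd (M i)))"
  define b where "b = (\<lambda>i\<in>{..<m}. snd (snd (M i)))"
  define P where "P = product_group {..<m} G"
  have grp: "\<And>i. i \<in> {..<m} \<Longrightarrow> group (G i)" using wg by (auto simp: wgen_def G_def)
  interpret P: group P unfolding P_def by (intro product_group grp)
  have aP: "a \<in> carrier P" "b \<in> carrier P" using wg by (auto simp: P_def a_def b_def G_def wgen_def)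
  have R: "rmap_prod m M = (P\<lparr>carrier := generate P {a, b}\<rparr>, a, b)"
    by (simp add: rmap_prod_def Let_def P_def G_def[abs_def] a_def b_def)
  have gen: "generate P {a, b} = range (ev P a b)" using aP by (simp add: P.generate_ev)
  have sg: "subgroup (generate P {a, b}) P" using aP by (intro P.generate_is_subgroup) auto
  define H where "H = P\<lparr>carrier := generate P {a, b}\<rparr>"
  have evH: "ev H a b w = ev P a b w" for w
  proof (induction w)
    case Nil then show ?case by (simp add: H_def)
  next
    case (Cons c w)
    have "letter H a b c = letter P a b c"
      using aP sg by (auto simp: letter_def H_def intro: generate.incl P.m_inv_consistent)
    then show ?case using Cons by (simp add: H_def)
  qed
  have evP: "ev P a b w = (\<lambda>i\<in>{..<m}. ev (G i) (a i) (b i) w)" for w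
    unfolding P_def using aP grp by (intro ev_product) (auto simp: P_def)
  show "wgen (fst (rmap_prod m M)) (fst (snd (rmap_prod m M))) (snd (snd (rmap_prod m M)))"
    unfolding R wgen_def fst_conv snd_conv H_def[symmetric]
  proof (intro conjI)
    show "group H" unfolding H_def using sg by (rule P.subgroup_imp_group)
    show "a \<in> carrier H" "b \<in> carrier H" by (auto simp: H_def intro: generate.incl)
    have "carrier H = range (ev P a b)" by (simp add: H_def gen)
    then show "carrier H = range (ev H a b)" by (simp add: evH)
  qed
  show "rel (fst (rmap_prod m M)) (fst (snd (rmap_prod m M))) (snd (snd (rmap_prod m M))) =
           {w. \<forall>i<m. w \<in> rel (fst (M i)) (fst (snd (M i))) (snd (snd (M i)))}"
    unfolding R fst_conv snd_conv H_def[symmetric]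
  proof (intro Set.set_eqI)
    fix w
    have "w \<in> rel H a b \<longleftrightarrow> (\<lambda>i\<in>{..<m}. ev (G i) (a i) (b i) w) = (\<lambda>i\<in>{..<m}. \<one>\<^bsub>G i\<^esub>)"
    proof -
      have o: "\<one>\<^bsub>H\<^esub> = \<one>\<^bsub>P\<^esub>" by (simp add: H_def)
      have o2: "\<one>\<^bsub>P\<^esub> = (\<lambda>i\<in>{..<m}. \<one>\<^bsub>G i\<^esub>)" by (simp add: P_def)
      show ?thesis by (simp only: rel_def mem_Collect_eq evH o o2 evP)
    qed
    also have "\<dots> \<longleftrightarrow> (\<forall>i<m. ev (G i) (a i) (b i) w = \<one>\<^bsub>G i\<^esub>)"
    proof
      assume h: "(\<lambda>i\<in>{..<m}. ev (G i) (a i) (b i) w) = (\<lambda>i\<in>{..<m}. \<one>\<^bsub>G i\<^esub>)"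
      show "\<forall>i<m. ev (G i) (a i) (b i) w = \<one>\<^bsub>G i\<^esub>"
      proof (intro allI impI)
        fix i assume "i < m"
        then show "ev (G i) (a i) (b i) w = \<one>\<^bsub>G i\<^esub>" using fun_cong[OF h, of i] by simp
      qed
    next
      assume "\<forall>i<m. ev (G i) (a i) (b i) w = \<one>\<^bsub>G i\<^esub>"
      then show "(\<lambda>i\<in>{..<m}. ev (G i) (a i) (b i) w) = (\<lambda>i\<in>{..<m}. \<one>\<^bsub>G i\<^esub>)"
        by (intro restrict_ext) auto
    qed
    also have "\<dots> \<longleftrightarrow> (\<forall>i<m. w \<in> rel (fst (M i)) (fst (snd (M i))) (snd (snd (M i))))"
      by (simp add: rel_def G_def a_def b_def)
    finally show "w \<in> rel H a b \<longleftrightarrow> w \<in> {w. \<forall>i<m. w \<in> rel (fst (M i)) (fst (snd (M i))) (snd (snd (M i)))}"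
      by simp
  qed
qed

context group
begin

definition dset :: "'a \<Rightarrow> 'a \<Rightarrow> nat \<Rightarrow> 'a set" where
  "dset c a n = {c [^] (i::nat) | i. i < n} \<union> {c [^] (i::nat) \<otimes> a | i. i < n}"

lemma dset_card: "card (dset c a n) \<le> 2 * n"
proof -
  have "{c [^] (i::nat) | i. i < n} = (\<lambda>i. c [^] i) ` {..<n}" by auto
  moreover have "{c [^] (i::nat) \<otimes> a | i. i < n} = (\<lambda>i. c [^] i \<otimes> a) ` {..<n}" by auto
  ultimately have "card (dset c a n) \<le> card ((\<lambda>i. c [^] i) ` {..<n}) + card ((\<lambda>i. c [^] i \<otimes> a) ` {..<n})"
    unfolding dset_def by (metis card_Un_le)
  also have "\<dots> \<le> n + n"
    using card_image_le[of "{..<n}" "\<lambda>i. c [^] i"] card_image_le[of "{..<n}" "\<lambda>i. c [^] i \<otimes> a"]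
    by simp
  finally show ?thesis by simp
qed

lemma dset_finite: "finite (dset c a n)"
proof -
  have "{c [^] (i::nat) | i. i < n} = (\<lambda>i. c [^] i) ` {..<n}" by auto
  moreover have "{c [^] (i::nat) \<otimes> a | i. i < n} = (\<lambda>i. c [^] i \<otimes> a) ` {..<n}" by auto
  ultimately show ?thesis unfolding dset_def by simp
qed

lemma pow_mod_n:
  fixes n k :: nat
  assumes "c \<in> carrier G" "c [^] n = \<one>"
  shows "c [^] k = c [^] (k mod n)"
proof -
  have k: "n * (k div n) + k mod n = k" by (rule mult_div_mod_eq)
  have e: "c [^] (n * (k div n)) \<otimes> c [^] (k mod n) = c [^] (n * (k div n) + k mod n)"
    by (rule nat_pow_mult[OF assms(1)])
  have o: "c [^] (n * (k div n)) = \<one>"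
    using nat_pow_pow[OF assms(1), of n "k div n"] assms(2) by simp
  show ?thesis using e o k assms(1) by simp
qed

lemma dihedral_cover:
  fixes n :: nat
  assumes ab: "a \<in> carrier G" "b \<in> carrier G" and aa: "a \<otimes> a = \<one>" and bb: "b \<otimes> b = \<one>"
    and cn: "(a \<otimes> b) [^] n = \<one>" and n: "n \<ge> 1"
  shows "range (ev G a b) \<subseteq> dset (a \<otimes> b) a n"
proof -
  define c where "c = a \<otimes> b"
  have c: "c \<in> carrier G" using ab by (simp add: c_def)
  have ia: "inv a = a" by (rule inv_equality[OF aa ab(1) ab(1)])
  have ib: "inv b = b" by (rule inv_equality[OF bb ab(2) ab(2)])
  have cpow: "c [^] k \<in> dset c a n" for k :: nat
  proof -
    have "k mod n < n" using n by simp
    then have "c [^] (k mod n) \<in> dset c a n" unfolding dset_def by blast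
    then show ?thesis by (subst pow_mod_n[OF c cn[folded c_def], of k])
  qed
  have cpowa: "c [^] k \<otimes> a \<in> dset c a n" for k :: nat
  proof -
    have "k mod n < n" using n by simp
    then have "c [^] (k mod n) \<otimes> a \<in> dset c a n" unfolding dset_def by blast
    then show ?thesis by (subst pow_mod_n[OF c cn[folded c_def], of k])
  qed
  have ic: "c [^] (n - 1) = inv c"
  proof -
    obtain n' where nn: "n = Suc n'" using n by (cases n) auto
    have "c [^] (n - 1) \<otimes> c = c [^] n" using c by (simp add: nn)
    then show ?thesis using c cn[folded c_def] inv_equality[of "c [^] (n - 1)" c] by simp
  qed
  have ac: "a \<otimes> c = c [^] (n - 1) \<otimes> a"
  proof -
    have "inv c = b \<otimes> a" using ab ia ib by (simp add: c_def inv_mult_group)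
    then have "c [^] (n - 1) \<otimes> a = b \<otimes> a \<otimes> a" using ic by simp
    also have "\<dots> = b" using ab aa by (simp add: m_assoc)
    also have "\<dots> = a \<otimes> c" using ab aa by (simp add: c_def m_assoc[symmetric])
    finally show ?thesis by simp
  qed
  have acp: "a \<otimes> c [^] i = c [^] ((n - 1) * i) \<otimes> a" for i :: nat
  proof (induction i)
    case 0 then show ?case using ab by simp
  next
    case (Suc i)
    have "a \<otimes> c [^] Suc i = (a \<otimes> c [^] i) \<otimes> c" using ab c by (simp add: m_assoc)
    also have "\<dots> = c [^] ((n - 1) * i) \<otimes> (a \<otimes> c)" using Suc ab c by (simp add: m_assoc)
    also have "\<dots> = c [^] ((n - 1) * i) \<otimes> c [^] (n - 1) \<otimes> a" using ac ab c by (simp add: m_assoc)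
    also have "\<dots> = c [^] ((n - 1) * Suc i) \<otimes> a" using c by (simp add: nat_pow_mult add.commute)
    finally show ?case .
  qed
  have la: "a \<otimes> s \<in> dset c a n" if "s \<in> dset c a n" for s
  proof -
    from that obtain i :: nat where "s = c [^] i \<or> s = c [^] i \<otimes> a" unfolding dset_def by blast
    then show ?thesis
    proof
      assume "s = c [^] i" then show ?thesis using acp cpowa by simp
    next
      assume "s = c [^] i \<otimes> a"
      then have "a \<otimes> s = c [^] ((n - 1) * i) \<otimes> (a \<otimes> a)" using acp ab c by (simp add: m_assoc[symmetric])
      then show ?thesis using aa c cpow by simp
    qed
  qed
  have lc: "c \<otimes> s \<in> dset c a n" if "s \<in> dset c a n" for s
  proof -
    from that obtain i :: nat where "s = c [^] i \<or> s = c [^] i \<otimes> a" unfolding dset_def by blast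
    then show ?thesis
    proof
      assume "s = c [^] i" then show ?thesis using c cpow[of "Suc i"] nat_pow_Suc2[of c i] by metis
    next
      assume "s = c [^] i \<otimes> a"
      then have "c \<otimes> s = (c \<otimes> c [^] i) \<otimes> a" using c ab by (simp add: m_assoc)
      also have "\<dots> = c [^] Suc i \<otimes> a" using nat_pow_Suc2[OF c, of i] by simp
      finally have "c \<otimes> s = c [^] Suc i \<otimes> a" .
      then show ?thesis using cpowa[of "Suc i"] by (simp only:)
    qed
  qed
  have lb: "b \<otimes> s \<in> dset c a n" if "s \<in> dset c a n" for s
  proof -
    have "b = a \<otimes> c" using ab aa by (simp add: c_def m_assoc[symmetric])
    then have "b \<otimes> s = a \<otimes> (c \<otimes> s)" using ab c that unfolding dset_def by (auto simp: m_assoc)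
    then show ?thesis using la lc that by simp
  qed
  have all: "ev G a b w \<in> dset c a n" for w
  proof (induction w)
    case Nil then show ?case using cpow[of 0] c by simp
  next
    case (Cons l w)
    then show ?case using la lb ia ib by (auto simp: letter_def)
  qed
  show ?thesis unfolding c_def[symmetric] using all by blast
qed

lemma card_le_cover:
  fixes n :: nat
  assumes fin: "finite (carrier G)" and gen: "carrier G = range (ev G a b)"
    and ab: "a \<in> carrier G" "b \<in> carrier G" and bb: "b \<otimes> b = \<one>"
    and L: "L \<lhd> G" and aaL: "a \<otimes> a \<in> L" and cnL: "(a \<otimes> b) [^] n \<in> L" and n: "n \<ge> 1"
  shows "card (carrier G) \<le> 2 * n * card L"
proof -
  interpret L: normal L G by (rule L)
  define Q where "Q = G Mod L"
  interpret Q: group Q unfolding Q_def by (rule L.factorgroup_is_group)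
  define \<pi> where "\<pi> g = L #> g" for g
  have hom: "\<pi> \<in> hom G Q" unfolding \<pi>_def Q_def by (rule L.r_coset_hom_Mod)
  have \<pi>one: "\<pi> g = \<one>\<^bsub>Q\<^esub>" if "g \<in> L" for g
    using that L.rcos_const[OF is_group] by (simp add: \<pi>_def Q_def)
  have a': "\<pi> a \<in> carrier Q" "\<pi> b \<in> carrier Q" using hom ab by (auto simp: hom_def)
  have "\<pi> a \<otimes>\<^bsub>Q\<^esub> \<pi> a = \<one>\<^bsub>Q\<^esub>" using hom ab \<pi>one[OF aaL] by (simp add: hom_mult[symmetric])
  moreover have "\<pi> b \<otimes>\<^bsub>Q\<^esub> \<pi> b = \<one>\<^bsub>Q\<^esub>"
    using hom ab \<pi>one[of "b \<otimes> b"] bb L.one_closed by (simp add: hom_mult[symmetric])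
  moreover have "(\<pi> a \<otimes>\<^bsub>Q\<^esub> \<pi> b) [^]\<^bsub>Q\<^esub> n = \<one>\<^bsub>Q\<^esub>"
  proof -
    have "(\<pi> a \<otimes>\<^bsub>Q\<^esub> \<pi> b) [^]\<^bsub>Q\<^esub> n = \<pi> ((a \<otimes> b) [^] n)"
      using hom ab by (simp add: hom_mult[symmetric] hom_nat_pow)
    then show ?thesis using \<pi>one[OF cnL] by simp
  qed
  ultimately have cov: "range (ev Q (\<pi> a) (\<pi> b)) \<subseteq> Q.dset (\<pi> a \<otimes>\<^bsub>Q\<^esub> \<pi> b) (\<pi> a) n"
    using Q.dihedral_cover[OF a'] n by blast
  have "carrier Q = \<pi> ` carrier G"
    by (simp add: Q_def \<pi>_def carrier_FactGroup)
  also have "\<dots> = range (ev Q (\<pi> a) (\<pi> b))"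
    unfolding gen using hom_ev[OF is_group Q.is_group hom ab] by (auto simp: image_iff)
  finally have "card (carrier Q) \<le> 2 * n"
    using cov Q.dset_card by (metis card_mono Q.dset_finite order_trans)
  moreover have "card (carrier Q) * card L = card (carrier G)"
    using lagrange[OF L.subgroup_axioms] by (simp add: Q_def FactGroup_def order_def)
  ultimately show ?thesis
    by (metis mult_le_mono1)
qed

end

context group
begin

lemma conj_inv_closed:
  assumes fin: "finite L" and L: "L \<subseteq> carrier G" and g: "g \<in> carrier G"
    and cl: "\<And>l. l \<in> L \<Longrightarrow> g \<otimes> l \<otimes> inv g \<in> L"
  shows "\<And>l. l \<in> L \<Longrightarrow> inv g \<otimes> l \<otimes> g \<in> L"
proof -
  define f where "f l = g \<otimes> l \<otimes> inv g" for l
  have inj: "inj_on f L"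
  proof (rule inj_onI)
    fix x y assume xy: "x \<in> L" "y \<in> L" "f x = f y"
    then have "g \<otimes> x \<otimes> inv g = g \<otimes> y \<otimes> inv g" by (simp add: f_def)
    then show "x = y" using xy L g by (simp add: subsetD)
  qed
  have "f ` L \<subseteq> L" using cl by (auto simp: f_def)
  then have im: "f ` L = L" using endo_inj_surj[OF fin _ inj] by simp
  fix l assume l: "l \<in> L"
  then obtain l' where l': "l' \<in> L" "l = f l'" using im by (metis imageE)
  have l'c: "l' \<in> carrier G" using l' L by auto
  have e1: "inv g \<otimes> (g \<otimes> l') = l'" using l'c g by (simp add: m_assoc[symmetric])
  have "inv g \<otimes> l \<otimes> g = inv g \<otimes> (g \<otimes> l') \<otimes> (inv g \<otimes> g)"
    using l' l'c g by (simp add: f_def m_assoc)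
  then have "inv g \<otimes> l \<otimes> g = l'" using e1 l'c g by simp
  then show "inv g \<otimes> l \<otimes> g \<in> L" using l' by simp
qed

lemma conj_comp:
  assumes "g \<in> carrier G" "e \<in> carrier G" "l \<in> carrier G"
  shows "(g \<otimes> e) \<otimes> l \<otimes> inv (g \<otimes> e) = g \<otimes> (e \<otimes> l \<otimes> inv e) \<otimes> inv g"
  using assms by (simp add: m_assoc inv_mult_group)

lemma normal_from_gens:
  assumes fin: "finite (carrier G)" and gen: "carrier G = range (ev G a b)"
    and ab: "a \<in> carrier G" "b \<in> carrier G" and sub: "subgroup L G"
    and ca: "\<And>l. l \<in> L \<Longrightarrow> a \<otimes> l \<otimes> inv a \<in> L"
    and cb: "\<And>l. l \<in> L \<Longrightarrow> b \<otimes> l \<otimes> inv b \<in> L"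
  shows "L \<lhd> G"
proof -
  have Lc: "L \<subseteq> carrier G" using sub by (rule subgroup.subset)
  have finL: "finite L" using fin Lc finite_subset by blast
  have ia: "\<And>l. l \<in> L \<Longrightarrow> inv a \<otimes> l \<otimes> inv (inv a) \<in> L"
    using conj_inv_closed[OF finL Lc ab(1) ca] ab by simp
  have ib: "\<And>l. l \<in> L \<Longrightarrow> inv b \<otimes> l \<otimes> inv (inv b) \<in> L"
    using conj_inv_closed[OF finL Lc ab(2) cb] ab by simp
  have lt: "\<And>l. l \<in> L \<Longrightarrow> letter G a b c \<otimes> l \<otimes> inv (letter G a b c) \<in> L" for c
    using ca cb ia ib by (auto simp: letter_def)
  have wd: "\<And>l. l \<in> L \<Longrightarrow> ev G a b w \<otimes> l \<otimes> inv (ev G a b w) \<in> L" for w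
  proof (induction w)
    case Nil then show ?case using Lc by auto
  next
    case (Cons c w)
    have "ev G a b (c # w) \<otimes> l \<otimes> inv (ev G a b (c # w)) =
          letter G a b c \<otimes> (ev G a b w \<otimes> l \<otimes> inv (ev G a b w)) \<otimes> inv (letter G a b c)"
      using Cons.prems Lc ab by (simp add: conj_comp letter_closed ev_closed subsetD)
    then show ?case using Cons lt by simp
  qed
  show ?thesis
    unfolding normal_inv_iff using sub gen wd by auto
qed

lemma two_inv_gen_order:
  assumes fin: "finite (carrier G)" and gen: "carrier G = range (ev G a b)"
    and ab: "a \<in> carrier G" "b \<in> carrier G" and aa: "a \<otimes> a = \<one>" and bb: "b \<otimes> b = \<one>"
    and card: "card (carrier G) = 2 * r" and r: "r \<ge> 3"
  shows "(a \<otimes> b) [^] r = \<one>"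
proof -
  define c where "c = a \<otimes> b"
  have c: "c \<in> carrier G" using ab by (simp add: c_def)
  define n where "n = ord c"
  have n1: "n \<ge> 1" using ord_ge_1[OF fin c] by (simp add: n_def)
  have cn: "c [^] n = \<one>" using c by (simp add: n_def)
  have "card (carrier G) \<le> 2 * n * card {\<one>}"
    by (rule card_le_cover[OF fin gen ab bb one_is_normal]) (use aa cn n1 in \<open>auto simp: c_def\<close>)
  then have rn: "r \<le> n" using card by simp
  have ndvd: "n dvd 2 * r" using ord_dvd_group_order[OF c] card by (simp add: n_def order_def)
  have "n \<noteq> 2 * r"
  proof
    assume n2: "n = 2 * r"
    have gsub: "generate G {c} \<subseteq> carrier G" using c by (intro generate_incl) auto
    have "card (generate G {c}) = n" using generate_pow_card[OF c] by (simp add: n_def)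
    then have "generate G {c} = carrier G"
      using card_subset_eq[OF fin gsub] card n2 by simp
    moreover have "ord c \<noteq> 0" using n1 by (simp add: n_def)
    ultimately have "carrier G = {c [^] k | k. k \<in> (UNIV :: nat set)}"
      using generate_pow_nat[OF c] by simp
    then obtain k :: nat where ak: "a = c [^] k" using ab by auto
    have comm: "a \<otimes> c = c \<otimes> a"
      using nat_pow_Suc2[OF c, of k] nat_pow_Suc[of c k] by (simp add: ak)
    have b1: "b = a \<otimes> b \<otimes> a"
    proof -
      have "a \<otimes> (a \<otimes> b) = (a \<otimes> b) \<otimes> a" using comm by (simp add: c_def)
      then have "b = (a \<otimes> b) \<otimes> a" using ab aa by (simp add: m_assoc[symmetric])
      then show ?thesis by simp
    qed
    have ba: "b \<otimes> a = a \<otimes> b"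
    proof -
      have "b \<otimes> a = (a \<otimes> b \<otimes> a) \<otimes> a" using b1 by simp
      also have "\<dots> = a \<otimes> b \<otimes> (a \<otimes> a)" using ab by (simp add: m_assoc)
      finally show ?thesis using aa ab by simp
    qed
    have "c [^] (2::nat) = \<one>"
    proof -
      have "c [^] (2::nat) = a \<otimes> (b \<otimes> a) \<otimes> b" using ab by (simp add: c_def numeral_2_eq_2 m_assoc)
      also have "\<dots> = (a \<otimes> a) \<otimes> (b \<otimes> b)" using ab by (simp add: ba m_assoc)
      finally show ?thesis using aa bb by simp
    qed
    then have "n dvd 2" using pow_eq_id[OF c] by (simp add: n_def)
    then have "n \<le> 2" by (simp add: dvd_imp_le)
    then show False using n2 r by simp
  qed
  then have "n = r"
  proof -
    obtain q where q: "2 * r = n * q" using ndvd by auto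
    have "q \<noteq> 0"
    proof
      assume "q = 0" with q have "2 * r = 0" by simp
      with r show False by simp
    qed
    moreover have "q \<noteq> 1" using q \<open>n \<noteq> 2 * r\<close> by auto
    ultimately have "q \<ge> 2" by simp
    then have "n * 2 \<le> n * q" by (rule mult_le_mono2)
    then have "n * 2 \<le> 2 * r" using q by simp
    then have "n \<le> r" by simp
    then show ?thesis using rn by simp
  qed
  then show ?thesis using cn by (simp add: c_def)
qed

lemma pelem_in_normal:
  assumes fin: "finite (carrier G)" and K: "K \<lhd> G" and card: "card (carrier G) = 2 * r * card K"
    and p: "Factorial_Ring.prime (p::nat)" and ndvd: "\<not> p dvd 2 * r" and g: "g \<in> carrier G" and gp: "g [^] p = \<one>"
  shows "g \<in> K"
proof -
  interpret K: normal K G by (rule K)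
  define Q where "Q = G Mod K"
  interpret Q: group Q unfolding Q_def by (rule K.factorgroup_is_group)
  have Kpos: "card K > 0" using K.finite_imp_card_positive fin by simp
  have "card (rcosets K) * card K = 2 * r * card K"
    using lagrange[OF K.subgroup_axioms] card by (simp add: order_def)
  then have cQ: "order Q = 2 * r" using Kpos by (simp add: Q_def order_def FactGroup_def)
  define h where "h = K #> g"
  have h: "h \<in> carrier Q" using g K.subset by (simp add: h_def Q_def FactGroup_def rcosetsI)
  have "h [^]\<^bsub>Q\<^esub> p = K #> (g [^] p)" using K.FactGroup_pow[OF g] by (simp add: h_def Q_def)
  also have "\<dots> = \<one>\<^bsub>Q\<^esub>" using gp K.subset by (simp add: Q_def coset_mult_one)
  finally have hp: "h [^]\<^bsub>Q\<^esub> p = \<one>\<^bsub>Q\<^esub>" .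
  have hr: "h [^]\<^bsub>Q\<^esub> (2 * r) = \<one>\<^bsub>Q\<^esub>" using Q.pow_order_eq_1[OF h] cQ by simp
  have "Q.ord h dvd p" "Q.ord h dvd 2 * r" using hp hr Q.pow_eq_id[OF h] by auto
  moreover have "coprime p (2 * r)" using prime_imp_coprime[OF p ndvd] .
  ultimately have "Q.ord h dvd 1" by (metis coprime_common_divisor)
  then have "h [^]\<^bsub>Q\<^esub> (1::nat) = \<one>\<^bsub>Q\<^esub>" using Q.pow_eq_id[OF h, of 1] by blast
  then have "h = \<one>\<^bsub>Q\<^esub>" using h by simp
  then have "K #> g = K" by (simp add: h_def Q_def)
  then show ?thesis using coset_join1[OF _ g K.subgroup_axioms] by simp
qed

end

lemma mgraph_iso_card:
  assumes "mgraph_iso (V, E, en) (V', E', en')"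
  shows "card V = card V'" "card E = card E'"
  using assms unfolding mgraph_iso_def by (auto intro: bij_betw_same_card)

lemma PX_graph_cards:
  "card (fst (PX_graph p r s)) = r * p ^ s" "card (fst (snd (PX_graph p r s))) = r * p ^ Suc s"
proof -
  have "fst (PX_graph p r s) = {..<r} \<times> {xs. set xs \<subseteq> {..<p} \<and> length xs = s}"
    by (auto simp: PX_graph_def)
  then show "card (fst (PX_graph p r s)) = r * p ^ s"
    by (simp add: card_cartesian_product card_lists_length_eq)
  have "fst (snd (PX_graph p r s)) = {..<r} \<times> {xs. set xs \<subseteq> {..<p} \<and> length xs = Suc s}"
    by (auto simp: PX_graph_def)
  then show "card (fst (snd (PX_graph p r s))) = r * p ^ Suc s"
    by (simp add: card_cartesian_product card_lists_length_eq)
qed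

lemma rho_pow_2p:
  assumes aug: "augmented_PX_map p r (G, a, b)" and r: "r \<ge> 1" and p: "p \<ge> 1"
  shows "a [^]\<^bsub>G\<^esub> (2 * p) = \<one>\<^bsub>G\<^esub>"
proof -
  have rd: "rotary_datum (G, a, b)" using aug by (simp add: augmented_PX_map_def)
  interpret G: group G using rd by (simp add: rotary_datum_def)
  have fin: "finite (carrier G)" and ab: "a \<in> carrier G" "b \<in> carrier G"
    and b1: "b \<noteq> \<one>\<^bsub>G\<^esub>" and bb: "b \<otimes>\<^bsub>G\<^esub> b = \<one>\<^bsub>G\<^esub>"
    using rd by (auto simp: rotary_datum_def)
  define V where "V = (\<Union>g\<in>carrier G. {g <#\<^bsub>G\<^esub> generate G {a}})"
  define E where "E = (\<Union>g\<in>carrier G. {g <#\<^bsub>G\<^esub> generate G {b}})"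
  have ug: "ugraph (G, a, b) = (V, E, (\<lambda>e. {v \<in> V. v \<inter> e \<noteq> {}}))"
    by (simp add: ugraph_def Let_def V_def E_def)
  have sa: "subgroup (generate G {a}) G" using ab by (intro G.generate_is_subgroup) auto
  have sb: "subgroup (generate G {b}) G" using ab by (intro G.generate_is_subgroup) auto
  have cV: "card V * G.ord a = card (carrier G)"
    using G.l_lagrange[OF fin sa] G.generate_pow_card[OF ab(1)]
    by (simp add: V_def LCOSETS_def order_def)
  have ob: "G.ord b = 2"
  proof -
    have "G.ord b dvd 2" using G.pow_eq_id[OF ab(2), of 2] bb ab by (simp add: numeral_2_eq_2)
    moreover have "G.ord b \<noteq> 1" using G.pow_eq_id[OF ab(2), of 1] b1 ab by auto
    moreover have "G.ord b \<noteq> 0" using G.ord_ge_1[OF fin ab(2)] by simp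
    moreover have "G.ord b \<le> 2" using \<open>G.ord b dvd 2\<close> by (simp add: dvd_imp_le)
    ultimately show ?thesis by linarith
  qed
  have cE: "card E * 2 = card (carrier G)"
    using G.l_lagrange[OF fin sb] G.generate_pow_card[OF ab(2)] ob
    by (simp add: E_def LCOSETS_def order_def)
  have oa: "G.ord a dvd 2 * p"
  proof (cases "\<exists>s. mgraph_iso (ugraph (G, a, b)) (PX_graph p r s)")
    case True
    then obtain s where iso: "mgraph_iso (V, E, (\<lambda>e. {v \<in> V. v \<inter> e \<noteq> {}})) (PX_graph p r s)"
      using ug by auto
    obtain V' E' en' where PX: "PX_graph p r s = (V', E', en')" by (metis prod_cases3)
    have "card V = r * p ^ s" "card E = r * p ^ Suc s"
      using mgraph_iso_card[OF iso[unfolded PX]] PX_graph_cards[of p r s] PX by auto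
    then have "r * p ^ s * G.ord a = r * p ^ s * (2 * p)" using cV cE by (simp add: algebra_simps)
    then have "G.ord a = 2 * p" using r p by simp
    then show ?thesis by simp
  next
    case False
    then have iso: "mgraph_iso (V, E, (\<lambda>e. {v \<in> V. v \<inter> e \<noteq> {}})) (cycle_graph (p * r))"
      using aug ug by (simp add: augmented_PX_map_def)
    have "card V = p * r" "card E = p * r"
      using mgraph_iso_card[OF iso[unfolded cycle_graph_def]] by auto
    then have "p * r * G.ord a = p * r * 2" using cV cE by (simp add: algebra_simps)
    then have "G.ord a = 2" using r p by simp
    then show ?thesis by simp
  qed
  then show ?thesis using G.pow_eq_id[OF ab(1)] by simp
qed

definition irrS :: "nat \<Rightarrow> nat \<Rightarrow> ('a, 'm) monoid_scheme \<Rightarrow> 'a \<Rightarrow> 'a \<Rightarrow> 'a set \<Rightarrow> bool" where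
  "irrS p r G a b K \<longleftrightarrow> group G \<and> finite (carrier G) \<and> a \<in> carrier G \<and> b \<in> carrier G \<and>
     carrier G = range (ev G a b) \<and> b \<otimes>\<^bsub>G\<^esub> b = \<one>\<^bsub>G\<^esub> \<and> K \<lhd> G \<and> K \<noteq> {\<one>\<^bsub>G\<^esub>} \<and>
     (\<forall>x\<in>K. \<forall>y\<in>K. x \<otimes>\<^bsub>G\<^esub> y = y \<otimes>\<^bsub>G\<^esub> x) \<and> (\<forall>x\<in>K. x [^]\<^bsub>G\<^esub> p = \<one>\<^bsub>G\<^esub>) \<and>
     (\<forall>L. L \<lhd> G \<longrightarrow> L \<subseteq> K \<longrightarrow> L = {\<one>\<^bsub>G\<^esub>} \<or> L = K) \<and>
     card (carrier G) = 2 * r * card K \<and> a \<otimes>\<^bsub>G\<^esub> a \<in> K \<and> (a \<otimes>\<^bsub>G\<^esub> b) [^]\<^bsub>G\<^esub> r \<in> K"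

lemma (in normal) quotient_gen:
  assumes gen: "carrier G = range (ev G a b)" and ab: "a \<in> carrier G" "b \<in> carrier G"
  shows "carrier (G Mod H) = range (ev (G Mod H) (H #> a) (H #> b))"
proof -
  have hom: "(\<lambda>g. H #> g) \<in> hom G (G Mod H)" by (rule r_coset_hom_Mod)
  have "carrier (G Mod H) = (\<lambda>g. H #> g) ` carrier G" by (simp add: carrier_FactGroup)
  also have "\<dots> = range (ev (G Mod H) (H #> a) (H #> b))"
    unfolding gen using hom_ev[OF is_group factorgroup_is_group hom ab] by (auto simp: image_iff)
  finally show ?thesis .
qed

lemma card_set_mult:
  assumes grp: "group G" and K: "subgroup K G" and D: "subgroup D G" and KD: "K \<inter> D = {\<one>\<^bsub>G\<^esub>}"
  shows "card (K <#>\<^bsub>G\<^esub> D) = card K * card D"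
proof -
  interpret G: group G by (rule grp)
  have Kc: "K \<subseteq> carrier G" and Dc: "D \<subseteq> carrier G" using K D by (auto dest: subgroup.subset)
  define f where "f = (\<lambda>(k, d). k \<otimes>\<^bsub>G\<^esub> d)"
  have "inj_on f (K \<times> D)"
  proof (rule inj_onI, clarify)
    fix k d k' d' assume h: "k \<in> K" "d \<in> D" "k' \<in> K" "d' \<in> D" "f (k, d) = f (k', d')"
    have c: "k \<in> carrier G" "d \<in> carrier G" "k' \<in> carrier G" "d' \<in> carrier G" using h Kc Dc by auto
    have "inv\<^bsub>G\<^esub> k' \<otimes>\<^bsub>G\<^esub> k = d' \<otimes>\<^bsub>G\<^esub> inv\<^bsub>G\<^esub> d"
    proof -
      have "k \<otimes>\<^bsub>G\<^esub> d = k' \<otimes>\<^bsub>G\<^esub> d'" using h by (simp add: f_def)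
      then have "inv\<^bsub>G\<^esub> k' \<otimes>\<^bsub>G\<^esub> (k \<otimes>\<^bsub>G\<^esub> d) = inv\<^bsub>G\<^esub> k' \<otimes>\<^bsub>G\<^esub> (k' \<otimes>\<^bsub>G\<^esub> d')" by simp
      then have "inv\<^bsub>G\<^esub> k' \<otimes>\<^bsub>G\<^esub> k \<otimes>\<^bsub>G\<^esub> d = d'" using c by (simp add: G.m_assoc[symmetric])
      then have "inv\<^bsub>G\<^esub> k' \<otimes>\<^bsub>G\<^esub> k \<otimes>\<^bsub>G\<^esub> d \<otimes>\<^bsub>G\<^esub> inv\<^bsub>G\<^esub> d = d' \<otimes>\<^bsub>G\<^esub> inv\<^bsub>G\<^esub> d" by simp
      then show ?thesis using c by (simp add: G.m_assoc)
    qed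
    moreover have "inv\<^bsub>G\<^esub> k' \<otimes>\<^bsub>G\<^esub> k \<in> K" using h K by (simp add: subgroup.m_closed subgroup.m_inv_closed)
    moreover have "d' \<otimes>\<^bsub>G\<^esub> inv\<^bsub>G\<^esub> d \<in> D" using h D by (simp add: subgroup.m_closed subgroup.m_inv_closed)
    ultimately have "inv\<^bsub>G\<^esub> k' \<otimes>\<^bsub>G\<^esub> k = \<one>\<^bsub>G\<^esub>" "d' \<otimes>\<^bsub>G\<^esub> inv\<^bsub>G\<^esub> d = \<one>\<^bsub>G\<^esub>" using KD by auto
    then show "k = k' \<and> d = d'" using c
      by (metis G.inv_equality G.inv_inv G.inv_closed G.r_inv G.inv_comm)
  qed
  moreover have "f ` (K \<times> D) = K <#>\<^bsub>G\<^esub> D" by (auto simp: f_def set_mult_def)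
  ultimately have "card (K <#>\<^bsub>G\<^esub> D) = card (K \<times> D)" by (metis card_image)
  then show ?thesis by (simp add: card_cartesian_product)
qed

lemma card_dihedral: "card (carrier (dihedral_group r)) = 2 * r"
  by (simp add: dihedral_group_def card_cartesian_product)

lemma irr_to_irrS:
  assumes irr: "irreducible_rotary_augmented_PX_map p r (G, a, b)"
    and p: "Factorial_Ring.prime p" and podd: "odd p" and r: "r \<ge> 3" and pr: "\<not> p dvd r"
  shows "\<exists>K. irrS p r G a b K"
proof -
  have aug: "augmented_PX_map p r (G, a, b)" using irr by (simp add: irreducible_rotary_augmented_PX_map_def)
  have rd: "rotary_datum (G, a, b)" using aug by (simp add: augmented_PX_map_def)
  interpret G: group G using rd by (simp add: rotary_datum_def)
  have fin: "finite (carrier G)" and ab: "a \<in> carrier G" "b \<in> carrier G"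
    and bb: "b \<otimes>\<^bsub>G\<^esub> b = \<one>\<^bsub>G\<^esub>" and gen0: "generate G {a, b} = carrier G"
    using rd by (auto simp: rotary_datum_def)
  have gen: "carrier G = range (ev G a b)" using gen0 G.generate_ev[OF ab] by simp
  obtain K D where K: "K \<lhd> G" and K1: "K \<noteq> {\<one>\<^bsub>G\<^esub>}"
    and Kc: "\<forall>x\<in>K. \<forall>y\<in>K. x \<otimes>\<^bsub>G\<^esub> y = y \<otimes>\<^bsub>G\<^esub> x" and Kp: "\<forall>x\<in>K. x [^]\<^bsub>G\<^esub> p = \<one>\<^bsub>G\<^esub>"
    and D: "subgroup D G" and KD: "K \<inter> D = {\<one>\<^bsub>G\<^esub>}" and KDG: "K <#>\<^bsub>G\<^esub> D = carrier G"
    and Dd: "G\<lparr>carrier := D\<rparr> \<cong> dihedral_group r"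
    and Kmin: "\<forall>L. L \<lhd> G \<longrightarrow> L \<subseteq> K \<longrightarrow> L = {\<one>\<^bsub>G\<^esub>} \<or> L = K"
    using irr by (auto simp: irreducible_rotary_augmented_PX_map_def irreducible_PX_group_def)
  interpret K: normal K G by (rule K)
  have cD: "card D = 2 * r" using iso_same_card[OF Dd] card_dihedral by simp
  have cG: "card (carrier G) = 2 * r * card K"
    using card_set_mult[OF G.is_group K.subgroup_axioms D KD] KDG cD by simp
  have p1: "p \<ge> 1" using prime_gt_0_nat[OF p] by simp
  have ndvd: "\<not> p dvd 2 * r"
  proof
    assume "p dvd 2 * r"
    then have "p dvd 2 \<or> p dvd r" using p by (simp add: prime_dvd_mult_iff)
    then have "p dvd 2" using pr by simp
    then have "p \<le> 2" by (simp add: dvd_imp_le)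
    moreover have "p \<ge> 2" using p by (simp add: prime_ge_2_nat)
    ultimately show False using podd by simp
  qed
  have a2p: "a [^]\<^bsub>G\<^esub> (2 * p) = \<one>\<^bsub>G\<^esub>" using rho_pow_2p[OF aug] r p1 by simp
  have aa: "a \<otimes>\<^bsub>G\<^esub> a \<in> K"
  proof (rule G.pelem_in_normal[OF fin K cG p ndvd])
    show "a \<otimes>\<^bsub>G\<^esub> a \<in> carrier G" using ab by simp
    have "a \<otimes>\<^bsub>G\<^esub> a = a [^]\<^bsub>G\<^esub> (2::nat)" using ab by (simp add: numeral_2_eq_2)
    then show "(a \<otimes>\<^bsub>G\<^esub> a) [^]\<^bsub>G\<^esub> p = \<one>\<^bsub>G\<^esub>" using a2p ab by (simp add: G.nat_pow_pow)
  qed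
  define Q where "Q = G Mod K"
  interpret Q: group Q unfolding Q_def by (rule K.factorgroup_is_group)
  have Kpos: "card K > 0" using K.finite_imp_card_positive fin by simp
  have "card (rcosets\<^bsub>G\<^esub> K) * card K = 2 * r * card K"
    using G.lagrange[OF K.subgroup_axioms] cG by (simp add: order_def)
  then have cQ: "card (carrier Q) = 2 * r" using Kpos by (simp add: Q_def FactGroup_def)
  have finQ: "finite (carrier Q)" using cQ r by (intro card_ge_0_finite) simp
  have aQ: "K #>\<^bsub>G\<^esub> a \<in> carrier Q" "K #>\<^bsub>G\<^esub> b \<in> carrier Q"
    using ab K.subset by (auto simp: Q_def FactGroup_def G.rcosetsI)
  have mQ: "(K #>\<^bsub>G\<^esub> x) \<otimes>\<^bsub>Q\<^esub> (K #>\<^bsub>G\<^esub> y) = K #>\<^bsub>G\<^esub> (x \<otimes>\<^bsub>G\<^esub> y)" if "x \<in> carrier G" "y \<in> carrier G" for x y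
    using that by (simp add: Q_def K.rcos_sum)
  have "((K #>\<^bsub>G\<^esub> a) \<otimes>\<^bsub>Q\<^esub> (K #>\<^bsub>G\<^esub> b)) [^]\<^bsub>Q\<^esub> r = \<one>\<^bsub>Q\<^esub>"
  proof (rule Q.two_inv_gen_order[OF finQ _ aQ _ _ cQ r])
    show "carrier Q = range (ev Q (K #>\<^bsub>G\<^esub> a) (K #>\<^bsub>G\<^esub> b))"
      unfolding Q_def by (rule K.quotient_gen[OF gen ab])
    show "(K #>\<^bsub>G\<^esub> a) \<otimes>\<^bsub>Q\<^esub> (K #>\<^bsub>G\<^esub> a) = \<one>\<^bsub>Q\<^esub>"
      using mQ[OF ab(1) ab(1)] K.rcos_const[OF G.is_group aa] by (simp add: Q_def)
    show "(K #>\<^bsub>G\<^esub> b) \<otimes>\<^bsub>Q\<^esub> (K #>\<^bsub>G\<^esub> b) = \<one>\<^bsub>Q\<^esub>"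
      using mQ[OF ab(2) ab(2)] bb K.subset by (simp add: Q_def G.coset_mult_one)
  qed
  then have "K #>\<^bsub>G\<^esub> ((a \<otimes>\<^bsub>G\<^esub> b) [^]\<^bsub>G\<^esub> r) = K"
    using mQ[OF ab] K.FactGroup_pow[of "a \<otimes>\<^bsub>G\<^esub> b" r] ab by (simp add: Q_def)
  then have xr: "(a \<otimes>\<^bsub>G\<^esub> b) [^]\<^bsub>G\<^esub> r \<in> K"
    using G.coset_join1[OF _ _ K.subgroup_axioms] ab by simp
  show ?thesis unfolding irrS_def
    using G.is_group fin ab gen bb K K1 Kc Kp Kmin cG aa xr by blast
qed

definition cj :: "('a, 'm) monoid_scheme \<Rightarrow> 'a \<Rightarrow> 'a \<Rightarrow> 'a" where
  "cj G g y = g \<otimes>\<^bsub>G\<^esub> y \<otimes>\<^bsub>G\<^esub> inv\<^bsub>G\<^esub> g"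

fun sp :: "('a, 'm) monoid_scheme \<Rightarrow> 'a \<Rightarrow> 'a \<Rightarrow> nat list \<Rightarrow> 'a" where
  "sp G x e [] = \<one>\<^bsub>G\<^esub>"
| "sp G x e (i # ls) = cj G (x [^]\<^bsub>G\<^esub> i) e \<otimes>\<^bsub>G\<^esub> sp G x e ls"

context group
begin

lemma inv_cancel_left [simp]: "x \<in> carrier G \<Longrightarrow> y \<in> carrier G \<Longrightarrow> inv x \<otimes> (x \<otimes> y) = y"
  by (simp add: m_assoc[symmetric])

lemma inv_cancel_left2 [simp]: "x \<in> carrier G \<Longrightarrow> y \<in> carrier G \<Longrightarrow> x \<otimes> (inv x \<otimes> y) = y"
  by (simp add: m_assoc[symmetric])

lemma cj_closed [simp]: "g \<in> carrier G \<Longrightarrow> y \<in> carrier G \<Longrightarrow> cj G g y \<in> carrier G"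
  by (simp add: cj_def)

lemma cj_mult: "g \<in> carrier G \<Longrightarrow> y \<in> carrier G \<Longrightarrow> z \<in> carrier G \<Longrightarrow> cj G g (y \<otimes> z) = cj G g y \<otimes> cj G g z"
  by (simp add: cj_def m_assoc)

lemma cj_one [simp]: "g \<in> carrier G \<Longrightarrow> cj G g \<one> = \<one>"
  by (simp add: cj_def)

lemma cj_by_one [simp]: "y \<in> carrier G \<Longrightarrow> cj G \<one> y = y"
  by (simp add: cj_def)

lemma cj_comp: "g \<in> carrier G \<Longrightarrow> h \<in> carrier G \<Longrightarrow> y \<in> carrier G \<Longrightarrow> cj G g (cj G h y) = cj G (g \<otimes> h) y"
  by (simp add: cj_def m_assoc inv_mult_group)

lemma cj_inv: "g \<in> carrier G \<Longrightarrow> y \<in> carrier G \<Longrightarrow> cj G g (inv y) = inv (cj G g y)"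
proof -
  assume g: "g \<in> carrier G" and y: "y \<in> carrier G"
  have "cj G g (inv y) \<otimes> cj G g y = \<one>" using g y by (simp add: cj_mult[symmetric])
  then show ?thesis using g y by (simp add: inv_equality)
qed

lemma cj_pow: "g \<in> carrier G \<Longrightarrow> y \<in> carrier G \<Longrightarrow> cj G g (y [^] (k::nat)) = (cj G g y) [^] k"
  by (induction k) (simp_all add: cj_mult)

lemma cj_xpow: "x \<in> carrier G \<Longrightarrow> y \<in> carrier G \<Longrightarrow>
    cj G (x [^] (i::nat)) (cj G (x [^] (j::nat)) y) = cj G (x [^] (i + j)) y"
  by (simp add: cj_comp nat_pow_mult)

lemma cj_inv_cancel: "g \<in> carrier G \<Longrightarrow> y \<in> carrier G \<Longrightarrow> cj G (inv g) (cj G g y) = y"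
  by (simp add: cj_comp cj_def[of G "\<one>"])

lemma sp_closed [simp]: "x \<in> carrier G \<Longrightarrow> e \<in> carrier G \<Longrightarrow> sp G x e ls \<in> carrier G"
  by (induction ls) auto

lemma sp_append: "x \<in> carrier G \<Longrightarrow> e \<in> carrier G \<Longrightarrow> sp G x e (ls @ js) = sp G x e ls \<otimes> sp G x e js"
  by (induction ls) (auto simp: m_assoc)

lemma sp_cjx: "x \<in> carrier G \<Longrightarrow> e \<in> carrier G \<Longrightarrow>
    cj G (x [^] (k::nat)) (sp G x e ls) = sp G x e (map (\<lambda>i. k + i) ls)"
  by (induction ls) (auto simp: cj_mult cj_xpow)

lemma sp_replicate0: "x \<in> carrier G \<Longrightarrow> e \<in> carrier G \<Longrightarrow> sp G x e (replicate k 0) = e [^] k"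
  by (induction k) (auto simp: nat_pow_Suc2[symmetric] simp del: nat_pow_Suc)

lemma sp_single: "x \<in> carrier G \<Longrightarrow> e \<in> carrier G \<Longrightarrow> sp G x e [i] = cj G (x [^] i) e"
  by simp

lemma pow_in_range_sp:
  assumes "x \<in> carrier G" "e \<in> carrier G" "y \<in> range (sp G x e)"
  shows "y [^] (k::nat) \<in> range (sp G x e)"
proof (induction k)
  case 0 then show ?case by (metis nat_pow_0 rangeI sp.simps(1))
next
  case (Suc k)
  then obtain ls js where "y [^] k = sp G x e ls" "y = sp G x e js" using assms by auto
  then have "y [^] Suc k = sp G x e (ls @ js)" using assms by (simp add: sp_append)
  then show ?case by simp
qed

end

locale pxs = group G for G (structure) +
  fixes a b :: 'a and r :: nat and A :: "'a set"
  assumes pxs_ab: "a \<in> carrier G" "b \<in> carrier G"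
    and pxs_bb: "b \<otimes> b = \<one>"
    and pxs_fin: "finite (carrier G)"
    and pxs_gen: "carrier G = range (ev G a b)"
    and pxs_A: "A \<lhd> G"
    and pxs_comm: "\<And>y z. y \<in> A \<Longrightarrow> z \<in> A \<Longrightarrow> y \<otimes> z = z \<otimes> y"
    and pxs_u: "a \<otimes> a \<in> A"
    and pxs_v: "(a \<otimes> b) [^] r \<in> A"
    and pxs_r: "r \<ge> 1"
begin

lemma A_sub: "A \<subseteq> carrier G"
  using pxs_A by (simp add: normal_imp_subgroup subgroup.subset)

lemma A_subgroup: "subgroup A G"
  using pxs_A by (simp add: normal_imp_subgroup)

lemma A_carr: "y \<in> A \<Longrightarrow> y \<in> carrier G"
  using A_sub by auto

lemma x_carr [simp]: "a \<otimes> b \<in> carrier G"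
  using pxs_ab by simp

lemma ib: "inv b = b"
  using pxs_ab pxs_bb by (simp add: inv_equality)

lemma A_cj: "g \<in> carrier G \<Longrightarrow> y \<in> A \<Longrightarrow> cj G g y \<in> A"
  using pxs_A by (simp add: normal_inv_iff cj_def)

lemma cj_A_triv: "z \<in> A \<Longrightarrow> y \<in> A \<Longrightarrow> cj G z y = y"
proof -
  assume z: "z \<in> A" and y: "y \<in> A"
  have zc: "z \<in> carrier G" and yc: "y \<in> carrier G" using z y A_carr by auto
  have "cj G z y = y \<otimes> z \<otimes> inv z" using pxs_comm[OF y z] by (simp add: cj_def)
  also have "\<dots> = y" using zc yc by (simp add: m_assoc)
  finally show ?thesis .
qed

lemma A_pow: "y \<in> A \<Longrightarrow> y [^] (k::nat) \<in> A"
  using A_subgroup by (induction k) (auto simp: subgroup.one_closed subgroup.m_closed)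

lemma cj_x_inv: "y \<in> A \<Longrightarrow> cj G (inv (a \<otimes> b)) y = cj G ((a \<otimes> b) [^] (r - 1)) y"
proof -
  assume y: "y \<in> A"
  define x where "x = a \<otimes> b"
  have x: "x \<in> carrier G" by (simp add: x_def)
  have rr: "r = Suc (r - 1)" using pxs_r by simp
  have xr: "x [^] r = x [^] (r - 1) \<otimes> x" using rr x nat_pow_Suc[of x "r - 1"] by metis
  have "inv (x [^] r) \<otimes> x [^] (r - 1) = inv x"
    using x by (simp add: xr inv_mult_group m_assoc)
  then have "cj G (inv x) y = cj G (inv (x [^] r)) (cj G (x [^] (r - 1)) y)"
    using x y A_carr by (simp add: cj_comp)
  also have "\<dots> = cj G (x [^] (r - 1)) y"
  proof -
    have "inv (x [^] r) \<in> A" using pxs_v A_subgroup by (simp add: x_def subgroup.m_inv_closed)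
    moreover have "cj G (x [^] (r - 1)) y \<in> A" using A_cj x y by simp
    ultimately show ?thesis by (rule cj_A_triv)
  qed
  finally show ?thesis by (simp add: x_def)
qed

lemma ax: "a \<otimes> (a \<otimes> b) = (a \<otimes> a) \<otimes> inv (a \<otimes> b) \<otimes> a"
  using pxs_ab by (simp add: inv_mult_group ib m_assoc)

lemma bx: "b \<otimes> (a \<otimes> b) = inv (a \<otimes> b) \<otimes> (a \<otimes> a) \<otimes> b"
  using pxs_ab by (simp add: inv_mult_group ib m_assoc)

lemma cj_gx:
  assumes g: "g = a \<or> g = b" and y: "y \<in> A"
  shows "cj G g (cj G (a \<otimes> b) y) = cj G ((a \<otimes> b) [^] (r - 1)) (cj G g y)"
proof -
  have gc: "g \<in> carrier G" using g pxs_ab by auto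
  have yc: "y \<in> carrier G" using y A_carr by simp
  have gy: "cj G g y \<in> A" using A_cj gc y by simp
  have "cj G g (cj G (a \<otimes> b) y) = cj G (inv (a \<otimes> b)) (cj G g y)"
    using g
  proof
    assume ga: "g = a"
    have "cj G g (cj G (a \<otimes> b) y) = cj G ((a \<otimes> a) \<otimes> inv (a \<otimes> b) \<otimes> a) y"
      using ga gc yc by (simp add: cj_comp ax)
    also have "\<dots> = cj G (a \<otimes> a) (cj G (inv (a \<otimes> b)) (cj G a y))"
      using pxs_ab yc by (simp add: cj_comp m_assoc)
    also have "\<dots> = cj G (inv (a \<otimes> b)) (cj G g y)"
      using ga gy pxs_u A_cj cj_A_triv by simp
    finally show ?thesis .
  next
    assume gb: "g = b"
    have "cj G g (cj G (a \<otimes> b) y) = cj G (inv (a \<otimes> b) \<otimes> (a \<otimes> a) \<otimes> b) y"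
      using gb gc yc by (simp add: cj_comp bx)
    also have "\<dots> = cj G (inv (a \<otimes> b)) (cj G (a \<otimes> a) (cj G b y))"
      using pxs_ab yc by (simp add: cj_comp m_assoc)
    also have "\<dots> = cj G (inv (a \<otimes> b)) (cj G g y)"
      using gb gy pxs_u cj_A_triv by simp
    finally show ?thesis .
  qed
  also have "\<dots> = cj G ((a \<otimes> b) [^] (r - 1)) (cj G g y)"
    using cj_x_inv gy by simp
  finally show ?thesis .
qed

lemma cj_gxpow:
  assumes g: "g = a \<or> g = b" and y: "y \<in> A"
  shows "cj G g (cj G ((a \<otimes> b) [^] (i::nat)) y) = cj G ((a \<otimes> b) [^] ((r - 1) * i)) (cj G g y)"
proof (induction i)
  case 0
  then show ?case using g pxs_ab y A_carr by auto
next
  case (Suc i)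
  have gc: "g \<in> carrier G" using g pxs_ab by auto
  have yc: "y \<in> carrier G" using y A_carr by simp
  have xi: "cj G ((a \<otimes> b) [^] i) y \<in> A" using A_cj y by simp
  have "cj G ((a \<otimes> b) [^] Suc i) y = cj G (a \<otimes> b) (cj G ((a \<otimes> b) [^] i) y)"
    using cj_xpow[of "a \<otimes> b" y 1 i] yc by simp
  then have "cj G g (cj G ((a \<otimes> b) [^] Suc i) y) = cj G ((a \<otimes> b) [^] (r - 1)) (cj G g (cj G ((a \<otimes> b) [^] i) y))"
    using cj_gx[OF g xi] by simp
  also have "\<dots> = cj G ((a \<otimes> b) [^] (r - 1)) (cj G ((a \<otimes> b) [^] ((r - 1) * i)) (cj G g y))"
    using Suc by simp
  also have "\<dots> = cj G ((a \<otimes> b) [^] ((r - 1) * Suc i)) (cj G g y)"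
    using gc yc by (simp add: cj_xpow add.commute)
  finally show ?case .
qed

lemma sp_A: "e \<in> A \<Longrightarrow> sp G (a \<otimes> b) e ls \<in> A"
proof (induction ls)
  case Nil then show ?case using A_subgroup by (simp add: subgroup.one_closed)
next
  case (Cons i ls)
  then show ?case using A_cj A_subgroup by (simp add: subgroup.m_closed)
qed

lemma span_cj_closed:
  assumes g: "g = a \<or> g = b" and e: "e \<in> A" and ge: "cj G g e \<in> range (sp G (a \<otimes> b) e)"
  shows "cj G g (sp G (a \<otimes> b) e ls) \<in> range (sp G (a \<otimes> b) e)"
proof (induction ls)
  case Nil then show ?case using g pxs_ab by (metis cj_one rangeI sp.simps(1))
next
  case (Cons i ls)
  have gc: "g \<in> carrier G" using g pxs_ab by auto
  have ec: "e \<in> carrier G" using e A_carr by simp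
  obtain js where js: "cj G g e = sp G (a \<otimes> b) e js" using ge by auto
  obtain ks where ks: "cj G g (sp G (a \<otimes> b) e ls) = sp G (a \<otimes> b) e ks" using Cons by auto
  have "cj G g (sp G (a \<otimes> b) e (i # ls)) = cj G g (cj G ((a \<otimes> b) [^] i) e) \<otimes> cj G g (sp G (a \<otimes> b) e ls)"
    using gc ec by (simp add: cj_mult)
  also have "\<dots> = cj G ((a \<otimes> b) [^] ((r - 1) * i)) (sp G (a \<otimes> b) e js) \<otimes> sp G (a \<otimes> b) e ks"
    using cj_gxpow[OF g e] js ks by simp
  also have "\<dots> = sp G (a \<otimes> b) e (map (\<lambda>j. (r - 1) * i + j) js @ ks)"
    using ec by (simp add: sp_cjx sp_append)
  finally show ?case by (metis rangeI)
qed

lemma span_subgroup: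
  assumes e: "e \<in> A"
  shows "subgroup (range (sp G (a \<otimes> b) e)) G"
proof (rule subgroupI)
  have ec: "e \<in> carrier G" using e A_carr by simp
  show "range (sp G (a \<otimes> b) e) \<subseteq> carrier G" using ec by auto
  show "range (sp G (a \<otimes> b) e) \<noteq> {}" by simp
  show "y \<otimes> z \<in> range (sp G (a \<otimes> b) e)" if yz: "y \<in> range (sp G (a \<otimes> b) e)" "z \<in> range (sp G (a \<otimes> b) e)" for y z
  proof -
    obtain ls where "y = sp G (a \<otimes> b) e ls" using yz(1) by auto
    moreover obtain js where "z = sp G (a \<otimes> b) e js" using yz(2) by auto
    ultimately have "y \<otimes> z = sp G (a \<otimes> b) e (ls @ js)" using ec by (simp add: sp_append)
    then show ?thesis by simp
  qed
  show "inv y \<in> range (sp G (a \<otimes> b) e)" if y: "y \<in> range (sp G (a \<otimes> b) e)" for y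
  proof -
    have yc: "y \<in> carrier G" using y ec by auto
    have "order G \<ge> 1" using pxs_fin by (simp add: order_gt_0_iff_finite Suc_le_eq)
    then have "y [^] (order G - 1) \<otimes> y = y [^] order G"
      using yc nat_pow_Suc[of y "order G - 1"] by simp
    then have "y [^] (order G - 1) \<otimes> y = \<one>" using pow_order_eq_1[OF yc] by simp
    then have "inv y = y [^] (order G - 1)" using yc by (simp add: inv_equality)
    then show ?thesis using pow_in_range_sp[OF x_carr ec y] by simp
  qed
qed

lemma span_normal:
  assumes e: "e \<in> A" and ae: "cj G a e \<in> range (sp G (a \<otimes> b) e)" and be: "cj G b e \<in> range (sp G (a \<otimes> b) e)"
  shows "range (sp G (a \<otimes> b) e) \<lhd> G"
proof (rule normal_from_gens[OF pxs_fin pxs_gen pxs_ab span_subgroup[OF e]])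
  fix l assume "l \<in> range (sp G (a \<otimes> b) e)"
  then obtain ls where l: "l = sp G (a \<otimes> b) e ls" by auto
  show "a \<otimes> l \<otimes> inv a \<in> range (sp G (a \<otimes> b) e)"
    using span_cj_closed[OF _ e ae, of ls] l by (simp add: cj_def)
  show "b \<otimes> l \<otimes> inv b \<in> range (sp G (a \<otimes> b) e)"
    using span_cj_closed[OF _ e be, of ls] l by (simp add: cj_def)
qed

lemma sp_hom: "y \<in> A \<Longrightarrow> z \<in> A \<Longrightarrow> sp G (a \<otimes> b) (y \<otimes> z) ls = sp G (a \<otimes> b) y ls \<otimes> sp G (a \<otimes> b) z ls"
proof (induction ls)
  case Nil then show ?case by simp
next
  case (Cons i ls)
  define p1 where "p1 = cj G ((a \<otimes> b) [^] i) y"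
  define p2 where "p2 = cj G ((a \<otimes> b) [^] i) z"
  define s1 where "s1 = sp G (a \<otimes> b) y ls"
  define s2 where "s2 = sp G (a \<otimes> b) z ls"
  have inA: "p1 \<in> A" "p2 \<in> A" "s1 \<in> A" "s2 \<in> A"
    using Cons.prems A_cj sp_A by (auto simp: p1_def p2_def s1_def s2_def)
  have c: "p1 \<in> carrier G" "p2 \<in> carrier G" "s1 \<in> carrier G" "s2 \<in> carrier G"
    using inA A_carr by auto
  have "sp G (a \<otimes> b) (y \<otimes> z) (i # ls) = (p1 \<otimes> p2) \<otimes> (s1 \<otimes> s2)"
    using Cons A_carr by (simp add: cj_mult p1_def p2_def s1_def s2_def)
  also have "\<dots> = p1 \<otimes> (p2 \<otimes> s1) \<otimes> s2" using c by (simp add: m_assoc)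
  also have "\<dots> = p1 \<otimes> (s1 \<otimes> p2) \<otimes> s2" using pxs_comm[OF inA(2) inA(3)] by simp
  also have "\<dots> = (p1 \<otimes> s1) \<otimes> (p2 \<otimes> s2)" using c by (simp add: m_assoc)
  finally show ?case by (simp add: p1_def p2_def s1_def s2_def)
qed

lemma sp_cj_arg: "y \<in> A \<Longrightarrow> sp G (a \<otimes> b) (cj G ((a \<otimes> b) [^] (j::nat)) y) ls = cj G ((a \<otimes> b) [^] j) (sp G (a \<otimes> b) y ls)"
proof (induction ls)
  case Nil then show ?case by simp
next
  case (Cons i ls)
  have yc: "y \<in> carrier G" using Cons.prems A_carr by simp
  have "cj G ((a \<otimes> b) [^] i) (cj G ((a \<otimes> b) [^] j) y) = cj G ((a \<otimes> b) [^] j) (cj G ((a \<otimes> b) [^] i) y)"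
    using yc by (simp add: cj_xpow add.commute)
  then show ?case using Cons yc by (simp add: cj_mult)
qed

lemma sp_sp_one:
  assumes e: "e \<in> A" and one: "sp G (a \<otimes> b) e ls = \<one>"
  shows "sp G (a \<otimes> b) (sp G (a \<otimes> b) e js) ls = \<one>"
proof (induction js)
  case Nil
  have "sp G (a \<otimes> b) \<one> ls = \<one>"
    by (induction ls) auto
  then show ?case by simp
next
  case (Cons j js)
  have c1: "cj G ((a \<otimes> b) [^] j) e \<in> A" using A_cj e by simp
  have c2: "sp G (a \<otimes> b) e js \<in> A" using sp_A e by simp
  have "sp G (a \<otimes> b) (sp G (a \<otimes> b) e (j # js)) ls =
        sp G (a \<otimes> b) (cj G ((a \<otimes> b) [^] j) e) ls \<otimes> sp G (a \<otimes> b) (sp G (a \<otimes> b) e js) ls"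
    using sp_hom[OF c1 c2] by simp
  also have "\<dots> = cj G ((a \<otimes> b) [^] j) \<one> \<otimes> \<one>"
    using sp_cj_arg[OF e] one Cons by simp
  finally show ?case by simp
qed

lemma cj_a_u: "cj G a (a \<otimes> a) = a \<otimes> a"
  using pxs_ab by (simp add: cj_def m_assoc)

lemma cj_b_u: "cj G b (a \<otimes> a) = cj G ((a \<otimes> b) [^] (r - 1)) (a \<otimes> a)"
proof -
  have "cj G b (a \<otimes> a) = cj G (inv (a \<otimes> b)) (a \<otimes> a)"
    using pxs_ab by (simp add: cj_def inv_mult_group ib m_assoc)
  then show ?thesis using cj_x_inv pxs_u by simp
qed

lemma cj_x_v: "cj G (a \<otimes> b) ((a \<otimes> b) [^] r) = (a \<otimes> b) [^] r"
proof -
  have e: "(a \<otimes> b) \<otimes> (a \<otimes> b) [^] r = (a \<otimes> b) [^] r \<otimes> (a \<otimes> b)"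
    using nat_pow_Suc2[of "a \<otimes> b" r] nat_pow_Suc[of "a \<otimes> b" r] by simp
  have "cj G (a \<otimes> b) ((a \<otimes> b) [^] r) = (a \<otimes> b) [^] r \<otimes> (a \<otimes> b) \<otimes> inv (a \<otimes> b)"
    by (simp add: cj_def e)
  also have "\<dots> = (a \<otimes> b) [^] r" by (simp add: m_assoc)
  finally show ?thesis .
qed

lemma cj_a_x: "cj G a (a \<otimes> b) = (a \<otimes> a) \<otimes> inv (a \<otimes> b)"
  using pxs_ab by (simp add: cj_def ax m_assoc)

lemma cj_b_x: "cj G b (a \<otimes> b) = inv (a \<otimes> b) \<otimes> (a \<otimes> a)"
  using pxs_ab by (simp add: cj_def bx m_assoc)

lemma fixx_normal: "{y \<in> A. cj G (a \<otimes> b) y = y} \<lhd> G"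
proof (rule normal_from_gens[OF pxs_fin pxs_gen pxs_ab])
  define F where "F = {y \<in> A. cj G (a \<otimes> b) y = y}"
  show "subgroup {y \<in> A. cj G (a \<otimes> b) y = y} G"
  proof (rule subgroupI)
    show "{y \<in> A. cj G (a \<otimes> b) y = y} \<subseteq> carrier G" using A_carr by auto
    show "{y \<in> A. cj G (a \<otimes> b) y = y} \<noteq> {}"
      using A_subgroup by (auto simp: subgroup.one_closed intro!: exI[of _ \<one>])
    show "inv y \<in> {y \<in> A. cj G (a \<otimes> b) y = y}" if "y \<in> {y \<in> A. cj G (a \<otimes> b) y = y}" for y
      using that A_subgroup A_carr by (auto simp: subgroup.m_inv_closed cj_inv)
    show "y \<otimes> z \<in> {y \<in> A. cj G (a \<otimes> b) y = y}" if "y \<in> {y \<in> A. cj G (a \<otimes> b) y = y}" "z \<in> {y \<in> A. cj G (a \<otimes> b) y = y}" for y z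
      using that A_subgroup A_carr by (auto simp: subgroup.m_closed cj_mult)
  qed
  have key: "cj G g y \<in> {y \<in> A. cj G (a \<otimes> b) y = y}" if g: "g = a \<or> g = b" and y: "y \<in> {y \<in> A. cj G (a \<otimes> b) y = y}" for g y
  proof -
    have yA: "y \<in> A" and yx: "cj G (a \<otimes> b) y = y" using y by auto
    have gc: "g \<in> carrier G" using g pxs_ab by auto
    have gyA: "cj G g y \<in> A" using A_cj gc yA by simp
    have "cj G g y = cj G ((a \<otimes> b) [^] (r - 1)) (cj G g y)"
      using cj_gx[OF g yA] yx by simp
    then have "cj G (a \<otimes> b) (cj G g y) = cj G ((a \<otimes> b) [^] (1 + (r - 1))) (cj G g y)"
      using cj_xpow[of "a \<otimes> b" "cj G g y" 1 "r - 1"] gyA A_carr by simp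
    also have "\<dots> = cj G ((a \<otimes> b) [^] r) (cj G g y)" using pxs_r by simp
    also have "\<dots> = cj G g y" using cj_A_triv[OF pxs_v gyA] .
    finally show ?thesis using gyA by simp
  qed
  show "\<And>l. l \<in> {y \<in> A. cj G (a \<otimes> b) y = y} \<Longrightarrow> a \<otimes> l \<otimes> inv a \<in> {y \<in> A. cj G (a \<otimes> b) y = y}"
    using key[of a] by (simp add: cj_def)
  show "\<And>l. l \<in> {y \<in> A. cj G (a \<otimes> b) y = y} \<Longrightarrow> b \<otimes> l \<otimes> inv b \<in> {y \<in> A. cj G (a \<otimes> b) y = y}"
    using key[of b] by (simp add: cj_def)
qed

end

context pxs
begin

lemma fixa_normal:
  assumes Xt: "\<And>y. y \<in> A \<Longrightarrow> cj G (a \<otimes> b) y = y"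
  shows "{y \<in> A. cj G a y = y} \<lhd> G"
proof (rule normal_from_gens[OF pxs_fin pxs_gen pxs_ab])
  show "subgroup {y \<in> A. cj G a y = y} G"
  proof (rule subgroupI)
    show "{y \<in> A. cj G a y = y} \<subseteq> carrier G" using A_carr by auto
    show "{y \<in> A. cj G a y = y} \<noteq> {}"
      using A_subgroup pxs_ab by (auto simp: subgroup.one_closed intro!: exI[of _ \<one>])
    show "inv y \<in> {y \<in> A. cj G a y = y}" if "y \<in> {y \<in> A. cj G a y = y}" for y
      using that A_subgroup A_carr pxs_ab by (auto simp: subgroup.m_inv_closed cj_inv)
    show "y \<otimes> z \<in> {y \<in> A. cj G a y = y}" if "y \<in> {y \<in> A. cj G a y = y}" "z \<in> {y \<in> A. cj G a y = y}" for y z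
      using that A_subgroup A_carr pxs_ab by (auto simp: subgroup.m_closed cj_mult)
  qed
  show "a \<otimes> l \<otimes> inv a \<in> {y \<in> A. cj G a y = y}" if "l \<in> {y \<in> A. cj G a y = y}" for l
    using that by (simp add: cj_def[symmetric])
  show "b \<otimes> l \<otimes> inv b \<in> {y \<in> A. cj G a y = y}" if l: "l \<in> {y \<in> A. cj G a y = y}" for l
  proof -
    have lA: "l \<in> A" and la: "cj G a l = l" using l by auto
    have lc: "l \<in> carrier G" using lA A_carr by simp
    have bdef: "b = inv a \<otimes> (a \<otimes> b)" using pxs_ab by simp
    have "cj G b l = cj G (inv a) (cj G (a \<otimes> b) l)"
      using pxs_ab lc by (simp add: cj_comp bdef[symmetric])
    also have "\<dots> = cj G (inv a) l" using Xt lA by simp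
    also have "\<dots> = cj G (inv a) (cj G a l)" using la by simp
    also have "\<dots> = l" using pxs_ab lc by (simp add: cj_inv_cancel)
    finally show ?thesis using l by (simp add: cj_def)
  qed
qed

lemma u_comm_xinv:
  assumes Xt: "\<And>y. y \<in> A \<Longrightarrow> cj G (a \<otimes> b) y = y"
  shows "(a \<otimes> a) \<otimes> inv (a \<otimes> b) = inv (a \<otimes> b) \<otimes> (a \<otimes> a)"
proof -
  have uc: "a \<otimes> a \<in> carrier G" using pxs_ab by simp
  have e: "(a \<otimes> b) \<otimes> (a \<otimes> a) \<otimes> inv (a \<otimes> b) = a \<otimes> a" using Xt[OF pxs_u] by (simp add: cj_def)
  have "inv (a \<otimes> b) \<otimes> (a \<otimes> a) = inv (a \<otimes> b) \<otimes> ((a \<otimes> b) \<otimes> (a \<otimes> a) \<otimes> inv (a \<otimes> b))"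
    using e by simp
  also have "\<dots> = (a \<otimes> a) \<otimes> inv (a \<otimes> b)" using uc by (simp add: m_assoc)
  finally show ?thesis by simp
qed

lemma v_pow_u:
  assumes Xt: "\<And>y. y \<in> A \<Longrightarrow> cj G (a \<otimes> b) y = y" and Rt: "\<And>y. y \<in> A \<Longrightarrow> cj G a y = y"
    and ex: "\<And>y. y \<in> A \<Longrightarrow> y [^] p = \<one>" and podd: "odd p"
  shows "(a \<otimes> b) [^] r = (a \<otimes> a) [^] (r * ((p + 1) div 2))"
proof -
  define x where "x = a \<otimes> b"
  define u where "u = a \<otimes> a"
  define v where "v = x [^] r"
  have c: "x \<in> carrier G" "u \<in> carrier G" "v \<in> carrier G" using pxs_ab by (auto simp: x_def u_def v_def)
  have "v = cj G a v" using Rt pxs_v by (simp add: v_def x_def)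
  also have "\<dots> = (cj G a x) [^] r" using pxs_ab c by (simp add: v_def cj_pow)
  also have "\<dots> = (u \<otimes> inv x) [^] r" by (simp add: cj_a_x x_def u_def)
  also have "\<dots> = u [^] r \<otimes> (inv x) [^] r"
  proof -
    have comm: "u \<otimes> inv x = inv x \<otimes> u" using u_comm_xinv[OF Xt] by (simp add: x_def u_def)
    show ?thesis by (rule pow_mult_distrib[OF comm]) (use c in auto)
  qed
  also have "\<dots> = u [^] r \<otimes> inv v" using c by (simp add: nat_pow_inv v_def)
  finally have "v = u [^] r \<otimes> inv v" .
  then have "v \<otimes> v = (u [^] r \<otimes> inv v) \<otimes> v" by (rule arg_cong[where f="\<lambda>z. z \<otimes> v"])
  then have vv: "v \<otimes> v = u [^] r" using c by (simp add: m_assoc)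
  have "v [^] p = \<one>" using ex pxs_v by (simp add: v_def x_def)
  then have "v [^] (p + 1) = v" using c by simp
  moreover have "p + 1 = 2 * ((p + 1) div 2)" using podd by simp
  ultimately have "v = (v [^] (2::nat)) [^] ((p + 1) div 2)" using c by (metis nat_pow_pow)
  also have "v [^] (2::nat) = v \<otimes> v" using c by (simp add: numeral_2_eq_2)
  finally show ?thesis using vv c by (simp add: nat_pow_pow v_def x_def u_def)
qed

lemma cj_v_inv:
  assumes u1: "a \<otimes> a = \<one>"
  shows "cj G a ((a \<otimes> b) [^] r) = inv ((a \<otimes> b) [^] r)" "cj G b ((a \<otimes> b) [^] r) = inv ((a \<otimes> b) [^] r)"
proof -
  show "cj G a ((a \<otimes> b) [^] r) = inv ((a \<otimes> b) [^] r)"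
    using pxs_ab by (simp add: cj_pow cj_a_x u1 nat_pow_inv)
  show "cj G b ((a \<otimes> b) [^] r) = inv ((a \<otimes> b) [^] r)"
    using pxs_ab by (simp add: cj_pow cj_b_x u1 nat_pow_inv)
qed

end

lemma dp_pow: "(x, y) [^]\<^bsub>G1 \<times>\<times> G2\<^esub> (n::nat) = (x [^]\<^bsub>G1\<^esub> n, y [^]\<^bsub>G2\<^esub> n)"
  by (induction n) auto

lemma dp_ev:
  assumes "group G1" "group G2" "a1 \<in> carrier G1" "b1 \<in> carrier G1" "a2 \<in> carrier G2" "b2 \<in> carrier G2"
  shows "ev (G1 \<times>\<times> G2) (a1, a2) (b1, b2) w = (ev G1 a1 b1 w, ev G2 a2 b2 w)"
proof (induction w)
  case Nil then show ?case by simp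
next
  case (Cons c w)
  have "letter (G1 \<times>\<times> G2) (a1, a2) (b1, b2) c = (letter G1 a1 b1 c, letter G2 a2 b2 c)"
    using assms by (auto simp: letter_def)
  then show ?case using Cons by simp
qed

locale tp = P1: pxs G1 a1 b1 r K1 + P2: pxs G2 a2 b2 r K2
  for G1 :: "('a, 'c) monoid_scheme" and a1 b1 r K1
  and G2 :: "('b, 'd) monoid_scheme" and a2 b2 K2
begin

definition CT where "CT = range (ev (G1 \<times>\<times> G2) (a1, a2) (b1, b2))"
definition TT where "TT = (G1 \<times>\<times> G2)\<lparr>carrier := CT\<rparr>"
definition AT where "AT = {t \<in> CT. fst t \<in> K1 \<and> snd t \<in> K2}"

lemma T0_group: "group (G1 \<times>\<times> G2)"
  by (simp add: DirProd_group P1.is_group P2.is_group)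

lemma abT0: "(a1, a2) \<in> carrier (G1 \<times>\<times> G2)" "(b1, b2) \<in> carrier (G1 \<times>\<times> G2)"
  using P1.pxs_ab P2.pxs_ab by auto

lemma evT0: "ev (G1 \<times>\<times> G2) (a1, a2) (b1, b2) w = (ev G1 a1 b1 w, ev G2 a2 b2 w)"
  using dp_ev[OF P1.is_group P2.is_group P1.pxs_ab P2.pxs_ab] .

lemma CT_sub: "subgroup CT (G1 \<times>\<times> G2)"
proof -
  interpret T0: group "G1 \<times>\<times> G2" by (rule T0_group)
  have "CT = generate (G1 \<times>\<times> G2) {(a1, a2), (b1, b2)}"
    unfolding CT_def using T0.generate_ev[OF abT0] by simp
  then show ?thesis using abT0 by (simp add: T0.generate_is_subgroup)
qed

lemma CT_carr: "t \<in> CT \<Longrightarrow> fst t \<in> carrier G1 \<and> snd t \<in> carrier G2"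
  unfolding CT_def evT0 using P1.ev_closed P2.ev_closed P1.pxs_ab P2.pxs_ab by auto

lemma TT_group: "group TT"
  unfolding TT_def using CT_sub by (rule group.subgroup_imp_group[OF T0_group])

lemma carrier_TT [simp]: "carrier TT = CT"
  by (simp add: TT_def)

lemma mult_TT: "t \<otimes>\<^bsub>TT\<^esub> s = (fst t \<otimes>\<^bsub>G1\<^esub> fst s, snd t \<otimes>\<^bsub>G2\<^esub> snd s)"
  by (simp add: TT_def mult_DirProd')

lemma one_TT [simp]: "\<one>\<^bsub>TT\<^esub> = (\<one>\<^bsub>G1\<^esub>, \<one>\<^bsub>G2\<^esub>)"
  by (simp add: TT_def)

lemma inv_TT: "t \<in> CT \<Longrightarrow> inv\<^bsub>TT\<^esub> t = (inv\<^bsub>G1\<^esub> fst t, inv\<^bsub>G2\<^esub> snd t)"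
proof -
  assume t: "t \<in> CT"
  have "inv\<^bsub>TT\<^esub> t = inv\<^bsub>G1 \<times>\<times> G2\<^esub> t"
    unfolding TT_def using group.m_inv_consistent[OF T0_group CT_sub t] .
  also have "\<dots> = (inv\<^bsub>G1\<^esub> fst t, inv\<^bsub>G2\<^esub> snd t)"
    using CT_carr[OF t] inv_DirProd[OF P1.is_group P2.is_group, of "fst t" "snd t"] by simp
  finally show ?thesis .
qed

lemma pow_TT: "t [^]\<^bsub>TT\<^esub> (n::nat) = (fst t [^]\<^bsub>G1\<^esub> n, snd t [^]\<^bsub>G2\<^esub> n)"
proof -
  have "t [^]\<^bsub>TT\<^esub> n = t [^]\<^bsub>G1 \<times>\<times> G2\<^esub> n"
    unfolding TT_def using monoid.nat_pow_consistent[OF group.is_monoid[OF T0_group]] by metis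
  also have "\<dots> = (fst t [^]\<^bsub>G1\<^esub> n, snd t [^]\<^bsub>G2\<^esub> n)"
    using dp_pow[of G1 G2 "fst t" "snd t" n] by simp
  finally show ?thesis .
qed

lemma evTT: "ev TT (a1, a2) (b1, b2) w = ev (G1 \<times>\<times> G2) (a1, a2) (b1, b2) w"
proof (induction w)
  case Nil then show ?case by (simp add: TT_def)
next
  case (Cons c w)
  have inC: "(a1, a2) \<in> CT" "(b1, b2) \<in> CT"
    unfolding CT_def using group.ev_single_a[OF T0_group abT0(1), of "(b1, b2)"]
      group.ev_single_b[OF T0_group abT0(2), of "(a1, a2)"] by (metis rangeI)+
  have "letter TT (a1, a2) (b1, b2) c = letter (G1 \<times>\<times> G2) (a1, a2) (b1, b2) c"
    using inC group.m_inv_consistent[OF T0_group CT_sub] by (auto simp: letter_def TT_def)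
  then show ?case using Cons by (simp add: TT_def)
qed

lemma abTT: "(a1, a2) \<in> CT" "(b1, b2) \<in> CT"
  unfolding CT_def using group.ev_single_a[OF T0_group abT0(1), of "(b1, b2)"]
    group.ev_single_b[OF T0_group abT0(2), of "(a1, a2)"] by (metis rangeI)+

lemma cj_TT: "g \<in> CT \<Longrightarrow> y \<in> CT \<Longrightarrow> cj TT g y = (cj G1 (fst g) (fst y), cj G2 (snd g) (snd y))"
  by (simp add: cj_def mult_TT inv_TT)

lemma CT_closed: "t \<in> CT \<Longrightarrow> s \<in> CT \<Longrightarrow> t \<otimes>\<^bsub>TT\<^esub> s \<in> CT"
  using monoid.m_closed[OF group.is_monoid[OF TT_group]] by simp

lemma CT_pow: "t \<in> CT \<Longrightarrow> t [^]\<^bsub>TT\<^esub> (n::nat) \<in> CT"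
  using monoid.nat_pow_closed[OF group.is_monoid[OF TT_group]] by simp

lemma CT_inv: "t \<in> CT \<Longrightarrow> inv\<^bsub>TT\<^esub> t \<in> CT"
  using group.inv_closed[OF TT_group] by simp

lemma sp_TT: "x \<in> CT \<Longrightarrow> e \<in> CT \<Longrightarrow> sp TT x e ls = (sp G1 (fst x) (fst e) ls, sp G2 (snd x) (snd e) ls)"
proof (induction ls)
  case Nil then show ?case by simp
next
  case (Cons i ls)
  have "x [^]\<^bsub>TT\<^esub> i \<in> CT" using CT_pow Cons by simp
  then have "cj TT (x [^]\<^bsub>TT\<^esub> i) e = (cj G1 (fst x [^]\<^bsub>G1\<^esub> i) (fst e), cj G2 (snd x [^]\<^bsub>G2\<^esub> i) (snd e))"
    using Cons by (simp add: cj_TT pow_TT)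
  then show ?case using Cons by (simp add: mult_TT)
qed

lemma AT_normal: "AT \<lhd> TT"
proof -
  interpret T: group TT by (rule TT_group)
  have sub: "subgroup AT TT"
  proof (rule T.subgroupI)
    show "AT \<subseteq> carrier TT" by (auto simp: AT_def)
    show "AT \<noteq> {}"
    proof -
      have "\<one>\<^bsub>TT\<^esub> \<in> CT" using T.one_closed by simp
      then have "(\<one>\<^bsub>G1\<^esub>, \<one>\<^bsub>G2\<^esub>) \<in> AT"
        using P1.A_subgroup P2.A_subgroup by (simp add: AT_def subgroup.one_closed)
      then show ?thesis by auto
    qed
    show "inv\<^bsub>TT\<^esub> t \<in> AT" if "t \<in> AT" for t
    proof -
      have t: "t \<in> CT" "fst t \<in> K1" "snd t \<in> K2" using that by (auto simp: AT_def)
      have "inv\<^bsub>TT\<^esub> t \<in> CT" using T.inv_closed t by simp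
      then show ?thesis using t P1.A_subgroup P2.A_subgroup
        by (simp add: AT_def inv_TT subgroup.m_inv_closed)
    qed
    show "t \<otimes>\<^bsub>TT\<^esub> s \<in> AT" if "t \<in> AT" "s \<in> AT" for t s
    proof -
      have ts: "t \<in> CT" "s \<in> CT" "fst t \<in> K1" "snd t \<in> K2" "fst s \<in> K1" "snd s \<in> K2"
        using that by (auto simp: AT_def)
      then show ?thesis using CT_closed P1.A_subgroup P2.A_subgroup
        by (simp add: AT_def mult_TT subgroup.m_closed)
    qed
  qed
  show ?thesis unfolding T.normal_inv_iff
  proof (intro conjI sub ballI)
    fix g h assume g: "g \<in> carrier TT" and h: "h \<in> AT"
    have gC: "g \<in> CT" using g by simp
    have hC: "h \<in> CT" "fst h \<in> K1" "snd h \<in> K2" using h by (auto simp: AT_def)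
    have "g \<otimes>\<^bsub>TT\<^esub> h \<otimes>\<^bsub>TT\<^esub> inv\<^bsub>TT\<^esub> g = cj TT g h" by (simp add: cj_def)
    also have "\<dots> = (cj G1 (fst g) (fst h), cj G2 (snd g) (snd h))" using gC hC by (simp add: cj_TT)
    finally have e: "g \<otimes>\<^bsub>TT\<^esub> h \<otimes>\<^bsub>TT\<^esub> inv\<^bsub>TT\<^esub> g = (cj G1 (fst g) (fst h), cj G2 (snd g) (snd h))" .
    have "g \<otimes>\<^bsub>TT\<^esub> h \<otimes>\<^bsub>TT\<^esub> inv\<^bsub>TT\<^esub> g \<in> CT" using gC hC CT_closed CT_inv by simp
    then show "g \<otimes>\<^bsub>TT\<^esub> h \<otimes>\<^bsub>TT\<^esub> inv\<^bsub>TT\<^esub> g \<in> AT"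
      using e CT_carr[OF gC] hC P1.A_cj P2.A_cj by (simp add: AT_def)
  qed
qed

lemma xTT: "(a1, a2) \<otimes>\<^bsub>TT\<^esub> (b1, b2) = (a1 \<otimes>\<^bsub>G1\<^esub> b1, a2 \<otimes>\<^bsub>G2\<^esub> b2)"
  by (simp add: mult_TT)

lemma pxs_TT: "pxs TT (a1, a2) (b1, b2) r AT"
proof -
  interpret T: group TT by (rule TT_group)
  show ?thesis
  proof (rule pxs.intro[OF TT_group], unfold pxs_axioms_def, intro conjI allI impI)
    show "(a1, a2) \<in> carrier TT" "(b1, b2) \<in> carrier TT" using abTT by auto
    show "(b1, b2) \<otimes>\<^bsub>TT\<^esub> (b1, b2) = \<one>\<^bsub>TT\<^esub>" using P1.pxs_bb P2.pxs_bb by (simp add: mult_TT)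
    show "finite (carrier TT)"
    proof -
      have "CT \<subseteq> carrier G1 \<times> carrier G2" using CT_carr by (auto simp: mem_Times_iff)
      then show ?thesis using P1.pxs_fin P2.pxs_fin finite_subset by auto
    qed
    show "carrier TT = range (ev TT (a1, a2) (b1, b2))" by (simp add: evTT CT_def)
    show "AT \<lhd> TT" by (rule AT_normal)
    fix y z assume yz: "y \<in> AT" "z \<in> AT"
    show "y \<otimes>\<^bsub>TT\<^esub> z = z \<otimes>\<^bsub>TT\<^esub> y"
      using yz P1.pxs_comm P2.pxs_comm by (auto simp: AT_def mult_TT)
  next
    show "(a1, a2) \<otimes>\<^bsub>TT\<^esub> (a1, a2) \<in> AT"
      using CT_closed[OF abTT(1) abTT(1)] P1.pxs_u P2.pxs_u by (simp add: AT_def mult_TT)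
    show "((a1, a2) \<otimes>\<^bsub>TT\<^esub> (b1, b2)) [^]\<^bsub>TT\<^esub> r \<in> AT"
      using CT_pow[OF CT_closed[OF abTT]] P1.pxs_v P2.pxs_v by (simp add: AT_def mult_TT pow_TT)
    show "r \<ge> 1" by (rule P1.pxs_r)
  qed
qed

end

context tp
begin

lemma sp_zero: "x \<in> CT \<Longrightarrow> e \<in> CT \<Longrightarrow> sp TT x e [0] = e"
proof -
  interpret T: group TT by (rule TT_group)
  assume "x \<in> CT" "e \<in> CT"
  then show ?thesis by (simp del: one_TT)
qed

lemma U_core:
  assumes K1min: "\<And>L. L \<lhd> G1 \<Longrightarrow> L \<subseteq> K1 \<Longrightarrow> L = {\<one>\<^bsub>G1\<^esub>} \<or> L = K1"
    and cG1: "card (carrier G1) = 2 * r * card K1"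
    and tb: "bij_betw \<theta> K1 K2"
    and th: "\<And>y z. y \<in> K1 \<Longrightarrow> z \<in> K1 \<Longrightarrow> \<theta> (y \<otimes>\<^bsub>G1\<^esub> z) = \<theta> y \<otimes>\<^bsub>G2\<^esub> \<theta> z"
    and tsp: "\<And>y ls. y \<in> K1 \<Longrightarrow> \<theta> (sp G1 (a1 \<otimes>\<^bsub>G1\<^esub> b1) y ls) = sp G2 (a2 \<otimes>\<^bsub>G2\<^esub> b2) (\<theta> y) ls"
    and t1: "\<theta> \<one>\<^bsub>G1\<^esub> = \<one>\<^bsub>G2\<^esub>"
    and eA: "e \<in> AT"
    and ca: "cj TT (a1, a2) e \<in> range (sp TT ((a1, a2) \<otimes>\<^bsub>TT\<^esub> (b1, b2)) e)"
    and cb: "cj TT (b1, b2) e \<in> range (sp TT ((a1, a2) \<otimes>\<^bsub>TT\<^esub> (b1, b2)) e)"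
    and uin: "(a1, a2) \<otimes>\<^bsub>TT\<^esub> (a1, a2) \<in> range (sp TT ((a1, a2) \<otimes>\<^bsub>TT\<^esub> (b1, b2)) e)"
    and vin: "((a1, a2) \<otimes>\<^bsub>TT\<^esub> (b1, b2)) [^]\<^bsub>TT\<^esub> r \<in> range (sp TT ((a1, a2) \<otimes>\<^bsub>TT\<^esub> (b1, b2)) e)"
    and e1: "fst e \<noteq> \<one>\<^bsub>G1\<^esub>"
  shows "rel G1 a1 b1 \<subseteq> rel G2 a2 b2"
proof -
  interpret T: pxs TT "(a1, a2)" "(b1, b2)" r AT by (rule pxs_TT)
  define xT where "xT = (a1, a2) \<otimes>\<^bsub>TT\<^esub> (b1, b2)"
  have xT: "xT = (a1 \<otimes>\<^bsub>G1\<^esub> b1, a2 \<otimes>\<^bsub>G2\<^esub> b2)" by (simp add: xT_def xTT)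
  have xC: "xT \<in> CT" using CT_closed[OF abTT] by (simp add: xT_def)
  define L where "L = range (sp TT xT e)"
  have eC: "e \<in> CT" "fst e \<in> K1" "snd e \<in> K2" using eA by (auto simp: AT_def)
  have Lnorm: "L \<lhd> TT" unfolding L_def xT_def by (rule T.span_normal[OF eA ca cb])
  have Lsub: "subgroup L TT" unfolding L_def xT_def by (rule T.span_subgroup[OF eA])
  have cardT: "card CT \<le> 2 * r * card L"
    using T.card_le_cover[OF T.pxs_fin T.pxs_gen T.pxs_ab T.pxs_bb Lnorm] uin vin T.pxs_r
    by (simp add: L_def xT_def)
  have fst_sp: "fst (sp TT xT e ls) = sp G1 (a1 \<otimes>\<^bsub>G1\<^esub> b1) (fst e) ls" for ls
    using sp_TT[OF xC eC(1)] xT by simp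
  have snd_sp: "snd (sp TT xT e ls) = sp G2 (a2 \<otimes>\<^bsub>G2\<^esub> b2) (snd e) ls" for ls
    using sp_TT[OF xC eC(1)] xT by simp
  define V1 where "V1 = range (sp G1 (a1 \<otimes>\<^bsub>G1\<^esub> b1) (fst e))"
  have ca1: "cj G1 a1 (fst e) \<in> V1"
  proof -
    obtain ls where "cj TT (a1, a2) e = sp TT xT e ls" using ca by (auto simp: xT_def)
    then have "fst (cj TT (a1, a2) e) = sp G1 (a1 \<otimes>\<^bsub>G1\<^esub> b1) (fst e) ls" using fst_sp by simp
    moreover have "fst (cj TT (a1, a2) e) = cj G1 a1 (fst e)" using cj_TT[OF abTT(1) eC(1)] by simp
    ultimately show ?thesis by (simp add: V1_def)
  qed
  have cb1: "cj G1 b1 (fst e) \<in> V1"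
  proof -
    obtain ls where "cj TT (b1, b2) e = sp TT xT e ls" using cb by (auto simp: xT_def)
    then have "fst (cj TT (b1, b2) e) = sp G1 (a1 \<otimes>\<^bsub>G1\<^esub> b1) (fst e) ls" using fst_sp by simp
    moreover have "fst (cj TT (b1, b2) e) = cj G1 b1 (fst e)" using cj_TT[OF abTT(2) eC(1)] by simp
    ultimately show ?thesis by (simp add: V1_def)
  qed
  have V1n: "V1 \<lhd> G1" unfolding V1_def by (rule P1.span_normal[OF eC(2) ca1[unfolded V1_def] cb1[unfolded V1_def]])
  have V1sub: "V1 \<subseteq> K1" unfolding V1_def using P1.sp_A[OF eC(2)] by auto
  have eV1: "fst e \<in> V1"
  proof -
    have "sp G1 (a1 \<otimes>\<^bsub>G1\<^esub> b1) (fst e) [0] = fst e" using P1.A_carr[OF eC(2)] P1.pxs_ab by simp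
    then show ?thesis unfolding V1_def by (metis rangeI)
  qed
  have V1K: "V1 = K1" using K1min[OF V1n V1sub] eV1 e1 by auto
  have key: "sp G2 (a2 \<otimes>\<^bsub>G2\<^esub> b2) (snd e) ls = \<one>\<^bsub>G2\<^esub>" if one: "sp G1 (a1 \<otimes>\<^bsub>G1\<^esub> b1) (fst e) ls = \<one>\<^bsub>G1\<^esub>" for ls
  proof -
    have "snd e \<in> \<theta> ` K1" using tb eC(3) by (simp add: bij_betw_def)
    then obtain y where y: "y \<in> K1" "snd e = \<theta> y" by auto
    have "y \<in> V1" using y V1K by simp
    then obtain js where "y = sp G1 (a1 \<otimes>\<^bsub>G1\<^esub> b1) (fst e) js" by (auto simp: V1_def)
    then have y1: "sp G1 (a1 \<otimes>\<^bsub>G1\<^esub> b1) y ls = \<one>\<^bsub>G1\<^esub>" using P1.sp_sp_one[OF eC(2) one] by simp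
    have "sp G2 (a2 \<otimes>\<^bsub>G2\<^esub> b2) (snd e) ls = \<theta> (sp G1 (a1 \<otimes>\<^bsub>G1\<^esub> b1) y ls)"
      using tsp[OF y(1), of ls] y(2) by simp
    then show ?thesis using y1 t1 by simp
  qed
  have LC: "L \<subseteq> CT" using Lsub by (simp add: subgroup.subset[of L TT, simplified])
  have LA: "L \<subseteq> AT" unfolding L_def xT_def using T.sp_A[OF eA] by auto
  have injL: "inj_on fst L"
  proof (rule inj_onI)
    fix l1 l2 assume l: "l1 \<in> L" "l2 \<in> L" "fst l1 = fst l2"
    have lc: "l1 \<in> CT" "l2 \<in> CT" using l LC by auto
    have "l1 \<otimes>\<^bsub>TT\<^esub> inv\<^bsub>TT\<^esub> l2 \<in> L"
      using l Lsub by (simp add: subgroup.m_closed subgroup.m_inv_closed)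
    then obtain ls where ls: "l1 \<otimes>\<^bsub>TT\<^esub> inv\<^bsub>TT\<^esub> l2 = sp TT xT e ls" by (auto simp: L_def)
    have c1: "fst l1 \<in> carrier G1" "fst l2 \<in> carrier G1" "snd l1 \<in> carrier G2" "snd l2 \<in> carrier G2"
      using CT_carr lc by auto
    have f: "fst (l1 \<otimes>\<^bsub>TT\<^esub> inv\<^bsub>TT\<^esub> l2) = \<one>\<^bsub>G1\<^esub>"
      using lc l(3) c1 by (simp add: mult_TT inv_TT)
    then have "sp G1 (a1 \<otimes>\<^bsub>G1\<^esub> b1) (fst e) ls = \<one>\<^bsub>G1\<^esub>" using ls fst_sp by simp
    then have "snd (l1 \<otimes>\<^bsub>TT\<^esub> inv\<^bsub>TT\<^esub> l2) = \<one>\<^bsub>G2\<^esub>" using ls snd_sp key by simp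
    then have "l1 \<otimes>\<^bsub>TT\<^esub> inv\<^bsub>TT\<^esub> l2 = \<one>\<^bsub>TT\<^esub>" using f by (simp add: prod_eq_iff)
    then have e: "l1 \<otimes>\<^bsub>TT\<^esub> inv\<^bsub>TT\<^esub> l2 \<otimes>\<^bsub>TT\<^esub> l2 = \<one>\<^bsub>TT\<^esub> \<otimes>\<^bsub>TT\<^esub> l2" by simp
    have lcT: "l1 \<in> carrier TT" "l2 \<in> carrier TT" using lc by simp_all
    have "l1 \<otimes>\<^bsub>TT\<^esub> inv\<^bsub>TT\<^esub> l2 \<otimes>\<^bsub>TT\<^esub> l2 = l1" using lcT by (simp add: T.m_assoc del: one_TT carrier_TT)
    moreover have "\<one>\<^bsub>TT\<^esub> \<otimes>\<^bsub>TT\<^esub> l2 = l2" using lcT by (simp del: one_TT carrier_TT)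
    ultimately show "l1 = l2" using e by simp
  qed
  have finK1: "finite K1" using P1.pxs_fin P1.A_sub finite_subset by auto
  have "card L = card (fst ` L)" using card_image[OF injL] by simp
  also have "\<dots> \<le> card K1" using LA finK1 by (intro card_mono) (auto simp: AT_def)
  finally have cL: "card L \<le> card K1" .
  have finCT: "finite CT" using T.pxs_fin by simp
  have cle: "card CT \<le> card (carrier G1)" using cardT cL cG1
    by (metis mult_le_mono2 order_trans)
  have img: "fst ` CT = carrier G1"
    unfolding CT_def P1.pxs_gen by (auto simp: evT0 image_iff)
  have injC: "inj_on fst CT"
  proof (rule eq_card_imp_inj_on[OF finCT])
    show "card (fst ` CT) = card CT" using img cle card_image_le[OF finCT, of fst] by simp
  qed
  show ?thesis
  proof
    fix w assume "w \<in> rel G1 a1 b1"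
    then have w1: "ev G1 a1 b1 w = \<one>\<^bsub>G1\<^esub>" by (simp add: rel_def)
    have in1: "(ev G1 a1 b1 w, ev G2 a2 b2 w) \<in> CT" unfolding CT_def by (metis evT0 rangeI)
    have in2: "(ev G1 a1 b1 [], ev G2 a2 b2 []) \<in> CT" unfolding CT_def by (metis evT0 rangeI)
    have "(ev G1 a1 b1 w, ev G2 a2 b2 w) = (ev G1 a1 b1 [], ev G2 a2 b2 [])"
      using inj_onD[OF injC _ in1 in2] w1 by simp
    then show "w \<in> rel G2 a2 b2" by (simp add: rel_def)
  qed
qed

end

context tp
begin

lemma U_half:
  fixes p :: nat
  assumes K1min: "\<And>L. L \<lhd> G1 \<Longrightarrow> L \<subseteq> K1 \<Longrightarrow> L = {\<one>\<^bsub>G1\<^esub>} \<or> L = K1"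
    and K2min: "\<And>L. L \<lhd> G2 \<Longrightarrow> L \<subseteq> K2 \<Longrightarrow> L = {\<one>\<^bsub>G2\<^esub>} \<or> L = K2"
    and K1ne: "K1 \<noteq> {\<one>\<^bsub>G1\<^esub>}"
    and cG1: "card (carrier G1) = 2 * r * card K1"
    and ex1: "\<And>y. y \<in> K1 \<Longrightarrow> y [^]\<^bsub>G1\<^esub> p = \<one>\<^bsub>G1\<^esub>"
    and ex2: "\<And>y. y \<in> K2 \<Longrightarrow> y [^]\<^bsub>G2\<^esub> p = \<one>\<^bsub>G2\<^esub>"
    and podd: "odd p"
    and tb: "bij_betw \<theta> K1 K2"
    and th: "\<And>y z. y \<in> K1 \<Longrightarrow> z \<in> K1 \<Longrightarrow> \<theta> (y \<otimes>\<^bsub>G1\<^esub> z) = \<theta> y \<otimes>\<^bsub>G2\<^esub> \<theta> z"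
    and ta: "\<And>y. y \<in> K1 \<Longrightarrow> \<theta> (cj G1 a1 y) = cj G2 a2 (\<theta> y)"
    and tbb: "\<And>y. y \<in> K1 \<Longrightarrow> \<theta> (cj G1 b1 y) = cj G2 b2 (\<theta> y)"
  shows "rel G1 a1 b1 \<subseteq> rel G2 a2 b2"
proof -
  interpret T: pxs TT "(a1, a2)" "(b1, b2)" r AT by (rule pxs_TT)
  have tK: "\<theta> y \<in> K2" if "y \<in> K1" for y using tb that by (auto simp: bij_betw_def)
  have tinj: "inj_on \<theta> K1" using tb by (simp add: bij_betw_def)
  have t1: "\<theta> \<one>\<^bsub>G1\<^esub> = \<one>\<^bsub>G2\<^esub>"
  proof -
    have o: "\<one>\<^bsub>G1\<^esub> \<in> K1" using P1.A_subgroup by (simp add: subgroup.one_closed)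
    have c: "\<theta> \<one>\<^bsub>G1\<^esub> \<in> carrier G2" using tK[OF o] P2.A_carr by simp
    have "\<theta> \<one>\<^bsub>G1\<^esub> \<otimes>\<^bsub>G2\<^esub> \<theta> \<one>\<^bsub>G1\<^esub> = \<theta> \<one>\<^bsub>G1\<^esub> \<otimes>\<^bsub>G2\<^esub> \<one>\<^bsub>G2\<^esub>"
      using th[OF o o] c by simp
    then show ?thesis using c P2.l_cancel by blast
  qed
  have tx: "\<theta> (cj G1 (a1 \<otimes>\<^bsub>G1\<^esub> b1) y) = cj G2 (a2 \<otimes>\<^bsub>G2\<^esub> b2) (\<theta> y)" if y: "y \<in> K1" for y
  proof -
    have yc: "y \<in> carrier G1" using y P1.A_carr by simp
    have by1: "cj G1 b1 y \<in> K1" using P1.A_cj P1.pxs_ab y by simp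
    have "cj G1 (a1 \<otimes>\<^bsub>G1\<^esub> b1) y = cj G1 a1 (cj G1 b1 y)" using P1.pxs_ab yc by (simp add: P1.cj_comp)
    then have "\<theta> (cj G1 (a1 \<otimes>\<^bsub>G1\<^esub> b1) y) = cj G2 a2 (cj G2 b2 (\<theta> y))" using ta[OF by1] tbb[OF y] by simp
    also have "\<dots> = cj G2 (a2 \<otimes>\<^bsub>G2\<^esub> b2) (\<theta> y)" using P2.pxs_ab tK[OF y] P2.A_carr by (simp add: P2.cj_comp)
    finally show ?thesis .
  qed
  have txp: "\<theta> (cj G1 ((a1 \<otimes>\<^bsub>G1\<^esub> b1) [^]\<^bsub>G1\<^esub> i) y) = cj G2 ((a2 \<otimes>\<^bsub>G2\<^esub> b2) [^]\<^bsub>G2\<^esub> i) (\<theta> y)" if y: "y \<in> K1" for y and i :: nat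
  proof (induction i)
    case 0 then show ?case using y P1.A_carr tK P2.A_carr by simp
  next
    case (Suc i)
    have yc: "y \<in> carrier G1" using y P1.A_carr by simp
    have c2: "\<theta> y \<in> carrier G2" using tK[OF y] P2.A_carr by simp
    have in1: "cj G1 ((a1 \<otimes>\<^bsub>G1\<^esub> b1) [^]\<^bsub>G1\<^esub> i) y \<in> K1" using P1.A_cj y by simp
    have "cj G1 ((a1 \<otimes>\<^bsub>G1\<^esub> b1) [^]\<^bsub>G1\<^esub> Suc i) y = cj G1 (a1 \<otimes>\<^bsub>G1\<^esub> b1) (cj G1 ((a1 \<otimes>\<^bsub>G1\<^esub> b1) [^]\<^bsub>G1\<^esub> i) y)"
      using P1.cj_xpow[of "a1 \<otimes>\<^bsub>G1\<^esub> b1" y 1 i] yc by simp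
    then have "\<theta> (cj G1 ((a1 \<otimes>\<^bsub>G1\<^esub> b1) [^]\<^bsub>G1\<^esub> Suc i) y) = cj G2 (a2 \<otimes>\<^bsub>G2\<^esub> b2) (cj G2 ((a2 \<otimes>\<^bsub>G2\<^esub> b2) [^]\<^bsub>G2\<^esub> i) (\<theta> y))"
      using tx[OF in1] Suc by simp
    also have "\<dots> = cj G2 ((a2 \<otimes>\<^bsub>G2\<^esub> b2) [^]\<^bsub>G2\<^esub> Suc i) (\<theta> y)"
      using P2.cj_xpow[of "a2 \<otimes>\<^bsub>G2\<^esub> b2" "\<theta> y" 1 i] c2 by simp
    finally show ?case .
  qed
  have tsp: "\<theta> (sp G1 (a1 \<otimes>\<^bsub>G1\<^esub> b1) y ls) = sp G2 (a2 \<otimes>\<^bsub>G2\<^esub> b2) (\<theta> y) ls" if y: "y \<in> K1" for y ls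
  proof (induction ls)
    case Nil then show ?case using t1 by simp
  next
    case (Cons i ls)
    have in1: "cj G1 ((a1 \<otimes>\<^bsub>G1\<^esub> b1) [^]\<^bsub>G1\<^esub> i) y \<in> K1" using P1.A_cj y by simp
    have in2: "sp G1 (a1 \<otimes>\<^bsub>G1\<^esub> b1) y ls \<in> K1" using P1.sp_A y by simp
    show ?case using th[OF in1 in2] txp[OF y] Cons by simp
  qed
  have finK1: "finite K1" using P1.pxs_fin P1.A_sub finite_subset by auto
  have cK1: "card K1 \<ge> 2"
  proof -
    obtain y where y: "y \<in> K1" "y \<noteq> \<one>\<^bsub>G1\<^esub>"
      using K1ne P1.A_subgroup subgroup.one_closed by fastforce
    have "{\<one>\<^bsub>G1\<^esub>, y} \<subseteq> K1" using y P1.A_subgroup by (simp add: subgroup.one_closed)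
    then have "card {\<one>\<^bsub>G1\<^esub>, y} \<le> card K1" using finK1 by (rule card_mono[rotated])
    then show ?thesis using y by simp
  qed
  have nontriv: "\<not> (a1 \<otimes>\<^bsub>G1\<^esub> a1 = \<one>\<^bsub>G1\<^esub> \<and> (a1 \<otimes>\<^bsub>G1\<^esub> b1) [^]\<^bsub>G1\<^esub> r = \<one>\<^bsub>G1\<^esub>)"
  proof
    assume h: "a1 \<otimes>\<^bsub>G1\<^esub> a1 = \<one>\<^bsub>G1\<^esub> \<and> (a1 \<otimes>\<^bsub>G1\<^esub> b1) [^]\<^bsub>G1\<^esub> r = \<one>\<^bsub>G1\<^esub>"
    have "card (carrier G1) \<le> 2 * r * card {\<one>\<^bsub>G1\<^esub>}"
      using P1.card_le_cover[OF P1.pxs_fin P1.pxs_gen P1.pxs_ab P1.pxs_bb P1.one_is_normal] h P1.pxs_r by simp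
    then have "2 * r * card K1 \<le> 2 * r * 1" using cG1 by simp
    then show False using cK1 P1.pxs_r by simp
  qed
  have transX: "(\<forall>y\<in>K1. cj G1 (a1 \<otimes>\<^bsub>G1\<^esub> b1) y = y) \<longleftrightarrow> (\<forall>z\<in>K2. cj G2 (a2 \<otimes>\<^bsub>G2\<^esub> b2) z = z)"
  proof
    assume h: "\<forall>y\<in>K1. cj G1 (a1 \<otimes>\<^bsub>G1\<^esub> b1) y = y"
    show "\<forall>z\<in>K2. cj G2 (a2 \<otimes>\<^bsub>G2\<^esub> b2) z = z"
    proof
      fix z assume "z \<in> K2"
      then obtain y where y: "y \<in> K1" "z = \<theta> y" using tb by (auto simp: bij_betw_def)
      then show "cj G2 (a2 \<otimes>\<^bsub>G2\<^esub> b2) z = z" using tx[OF y(1)] h by simp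
    qed
  next
    assume h: "\<forall>z\<in>K2. cj G2 (a2 \<otimes>\<^bsub>G2\<^esub> b2) z = z"
    show "\<forall>y\<in>K1. cj G1 (a1 \<otimes>\<^bsub>G1\<^esub> b1) y = y"
    proof
      fix y assume y: "y \<in> K1"
      have "\<theta> (cj G1 (a1 \<otimes>\<^bsub>G1\<^esub> b1) y) = \<theta> y" using tx[OF y] h tK[OF y] by simp
      moreover have "cj G1 (a1 \<otimes>\<^bsub>G1\<^esub> b1) y \<in> K1" using P1.A_cj y by simp
      ultimately show "cj G1 (a1 \<otimes>\<^bsub>G1\<^esub> b1) y = y" using tinj y by (simp add: inj_on_def)
    qed
  qed
  have transR: "(\<forall>y\<in>K1. cj G1 a1 y = y) \<longleftrightarrow> (\<forall>z\<in>K2. cj G2 a2 z = z)"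
  proof
    assume h: "\<forall>y\<in>K1. cj G1 a1 y = y"
    show "\<forall>z\<in>K2. cj G2 a2 z = z"
    proof
      fix z assume "z \<in> K2"
      then obtain y where y: "y \<in> K1" "z = \<theta> y" using tb by (auto simp: bij_betw_def)
      then show "cj G2 a2 z = z" using ta[OF y(1)] h by simp
    qed
  next
    assume h: "\<forall>z\<in>K2. cj G2 a2 z = z"
    show "\<forall>y\<in>K1. cj G1 a1 y = y"
    proof
      fix y assume y: "y \<in> K1"
      have "\<theta> (cj G1 a1 y) = \<theta> y" using ta[OF y] h tK[OF y] by simp
      moreover have "cj G1 a1 y \<in> K1" using P1.A_cj P1.pxs_ab y by simp
      ultimately show "cj G1 a1 y = y" using tinj y by (simp add: inj_on_def)
    qed
  qed
  define xT where "xT = (a1, a2) \<otimes>\<^bsub>TT\<^esub> (b1, b2)"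
  define uT where "uT = (a1, a2) \<otimes>\<^bsub>TT\<^esub> (a1, a2)"
  define vT where "vT = xT [^]\<^bsub>TT\<^esub> r"
  have xC: "xT \<in> CT" using CT_closed[OF abTT] by (simp add: xT_def)
  have uT: "uT = (a1 \<otimes>\<^bsub>G1\<^esub> a1, a2 \<otimes>\<^bsub>G2\<^esub> a2)" by (simp add: uT_def mult_TT)
  have vT: "vT = ((a1 \<otimes>\<^bsub>G1\<^esub> b1) [^]\<^bsub>G1\<^esub> r, (a2 \<otimes>\<^bsub>G2\<^esub> b2) [^]\<^bsub>G2\<^esub> r)"
    by (simp add: vT_def xT_def xTT pow_TT)
  have uA: "uT \<in> AT" using T.pxs_u by (simp add: uT_def)
  have vA: "vT \<in> AT" using T.pxs_v by (simp add: vT_def xT_def)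
  have uC: "uT \<in> CT" and vC: "vT \<in> CT" using uA vA by (auto simp: AT_def)
  have core: "rel G1 a1 b1 \<subseteq> rel G2 a2 b2"
    if eA: "e \<in> AT" and ca: "cj TT (a1, a2) e \<in> range (sp TT xT e)"
      and cb: "cj TT (b1, b2) e \<in> range (sp TT xT e)"
      and uin: "uT \<in> range (sp TT xT e)" and vin: "vT \<in> range (sp TT xT e)"
      and e1: "fst e \<noteq> \<one>\<^bsub>G1\<^esub>" for e
    by (rule U_core[OF K1min cG1 tb th tsp t1 eA ca[unfolded xT_def] cb[unfolded xT_def]
          uin[unfolded uT_def xT_def] vin[unfolded vT_def xT_def] e1])
  have spu0: "sp TT xT uT [0] = uT" using sp_zero[OF xC uC] .
  have cau: "cj TT (a1, a2) uT \<in> range (sp TT xT uT)"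
  proof -
    have "cj TT (a1, a2) uT = uT" using T.cj_a_u by (simp add: uT_def)
    then show ?thesis using spu0 by (metis rangeI)
  qed
  have cbu: "cj TT (b1, b2) uT \<in> range (sp TT xT uT)"
  proof -
    have "cj TT (b1, b2) uT = cj TT (xT [^]\<^bsub>TT\<^esub> (r - 1)) uT" using T.cj_b_u by (simp add: uT_def xT_def)
    also have "\<dots> = sp TT xT uT [r - 1]"
    proof -
      have xc: "xT \<in> carrier TT" and uc: "uT \<in> carrier TT" using xC uC by simp_all
      have "cj TT (xT [^]\<^bsub>TT\<^esub> (r - 1)) uT \<in> carrier TT"
        by (intro T.cj_closed T.nat_pow_closed xc uc)
      then show ?thesis by (simp del: one_TT carrier_TT)
    qed
    finally show ?thesis by (metis rangeI)
  qed
  have uinu: "uT \<in> range (sp TT xT uT)" using spu0 by (metis rangeI)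
  show ?thesis
  proof (cases "\<forall>y\<in>K1. cj G1 (a1 \<otimes>\<^bsub>G1\<^esub> b1) y = y")
    case False
    then have F2: "\<not> (\<forall>z\<in>K2. cj G2 (a2 \<otimes>\<^bsub>G2\<^esub> b2) z = z)" using transX by simp
    have v1: "(a1 \<otimes>\<^bsub>G1\<^esub> b1) [^]\<^bsub>G1\<^esub> r = \<one>\<^bsub>G1\<^esub>"
    proof -
      have "{y \<in> K1. cj G1 (a1 \<otimes>\<^bsub>G1\<^esub> b1) y = y} = {\<one>\<^bsub>G1\<^esub>}"
        using K1min[OF P1.fixx_normal] False by auto
      moreover have "(a1 \<otimes>\<^bsub>G1\<^esub> b1) [^]\<^bsub>G1\<^esub> r \<in> {y \<in> K1. cj G1 (a1 \<otimes>\<^bsub>G1\<^esub> b1) y = y}"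
        using P1.pxs_v P1.cj_x_v by simp
      ultimately show ?thesis by auto
    qed
    have v2: "(a2 \<otimes>\<^bsub>G2\<^esub> b2) [^]\<^bsub>G2\<^esub> r = \<one>\<^bsub>G2\<^esub>"
    proof -
      have "{y \<in> K2. cj G2 (a2 \<otimes>\<^bsub>G2\<^esub> b2) y = y} = {\<one>\<^bsub>G2\<^esub>}"
        using K2min[OF P2.fixx_normal] F2 by auto
      moreover have "(a2 \<otimes>\<^bsub>G2\<^esub> b2) [^]\<^bsub>G2\<^esub> r \<in> {y \<in> K2. cj G2 (a2 \<otimes>\<^bsub>G2\<^esub> b2) y = y}"
        using P2.pxs_v P2.cj_x_v by simp
      ultimately show ?thesis by auto
    qed
    have "vT = sp TT xT uT []" using v1 v2 vT by simp
    then have vin: "vT \<in> range (sp TT xT uT)" by (metis rangeI)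
    have e1: "fst uT \<noteq> \<one>\<^bsub>G1\<^esub>" using nontriv v1 uT by simp
    show ?thesis by (rule core[OF uA cau cbu uinu vin e1])
  next
    case Xt1: True
    then have Xt2: "\<forall>z\<in>K2. cj G2 (a2 \<otimes>\<^bsub>G2\<^esub> b2) z = z" using transX by simp
    show ?thesis
    proof (cases "\<forall>y\<in>K1. cj G1 a1 y = y")
      case Rt1: True
      then have Rt2: "\<forall>z\<in>K2. cj G2 a2 z = z" using transR by simp
      define c where "c = r * ((p + 1) div 2)"
      have v1: "(a1 \<otimes>\<^bsub>G1\<^esub> b1) [^]\<^bsub>G1\<^esub> r = (a1 \<otimes>\<^bsub>G1\<^esub> a1) [^]\<^bsub>G1\<^esub> c"
        unfolding c_def using P1.v_pow_u[of p] Xt1 Rt1 ex1 podd by blast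
      have v2: "(a2 \<otimes>\<^bsub>G2\<^esub> b2) [^]\<^bsub>G2\<^esub> r = (a2 \<otimes>\<^bsub>G2\<^esub> a2) [^]\<^bsub>G2\<^esub> c"
        unfolding c_def using P2.v_pow_u[of p] Xt2 Rt2 ex2 podd by blast
      have "vT = uT [^]\<^bsub>TT\<^esub> c" using v1 v2 by (simp add: vT uT pow_TT)
      also have "\<dots> = sp TT xT uT (replicate c 0)"
      proof -
        have xc: "xT \<in> carrier TT" and uc: "uT \<in> carrier TT" using xC uC by simp_all
        show ?thesis using T.sp_replicate0[OF xc uc, of c] by simp
      qed
      finally have vin: "vT \<in> range (sp TT xT uT)" by (metis rangeI)
      have e1: "fst uT \<noteq> \<one>\<^bsub>G1\<^esub>"
      proof
        assume "fst uT = \<one>\<^bsub>G1\<^esub>"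
        then have "a1 \<otimes>\<^bsub>G1\<^esub> a1 = \<one>\<^bsub>G1\<^esub>" using uT by simp
        then show False using nontriv v1 by simp
      qed
      show ?thesis by (rule core[OF uA cau cbu uinu vin e1])
    next
      case False
      then have R2: "\<not> (\<forall>z\<in>K2. cj G2 a2 z = z)" using transR by simp
      have u1: "a1 \<otimes>\<^bsub>G1\<^esub> a1 = \<one>\<^bsub>G1\<^esub>"
      proof -
        have "{y \<in> K1. cj G1 a1 y = y} = {\<one>\<^bsub>G1\<^esub>}"
          using K1min[OF P1.fixa_normal] Xt1 False by auto
        moreover have "a1 \<otimes>\<^bsub>G1\<^esub> a1 \<in> {y \<in> K1. cj G1 a1 y = y}" using P1.pxs_u P1.cj_a_u by simp
        ultimately show ?thesis by auto
      qed
      have u2: "a2 \<otimes>\<^bsub>G2\<^esub> a2 = \<one>\<^bsub>G2\<^esub>"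
      proof -
        have "{y \<in> K2. cj G2 a2 y = y} = {\<one>\<^bsub>G2\<^esub>}"
          using K2min[OF P2.fixa_normal] Xt2 R2 by auto
        moreover have "a2 \<otimes>\<^bsub>G2\<^esub> a2 \<in> {y \<in> K2. cj G2 a2 y = y}" using P2.pxs_u P2.cj_a_u by simp
        ultimately show ?thesis by auto
      qed
      have uT1: "uT = \<one>\<^bsub>TT\<^esub>" using u1 u2 uT by simp
      have spv0: "sp TT xT vT [0] = vT" using sp_zero[OF xC vC] .
      have vinv: "vT \<in> range (sp TT xT vT)" using spv0 by (metis rangeI)
      have Vsub: "subgroup (range (sp TT xT vT)) TT" unfolding xT_def by (rule T.span_subgroup[OF vA])
      have iv: "inv\<^bsub>TT\<^esub> vT \<in> range (sp TT xT vT)" using Vsub vinv by (rule subgroup.m_inv_closed)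
      have cav: "cj TT (a1, a2) vT = inv\<^bsub>TT\<^esub> vT"
        using T.cj_v_inv(1) uT1 by (simp add: uT_def vT_def xT_def del: one_TT)
      have cbv: "cj TT (b1, b2) vT = inv\<^bsub>TT\<^esub> vT"
        using T.cj_v_inv(2) uT1 by (simp add: uT_def vT_def xT_def del: one_TT)
      have "uT = sp TT xT vT []" using uT1 by (simp del: one_TT)
      then have uin: "uT \<in> range (sp TT xT vT)" by (metis rangeI)
      have e1: "fst vT \<noteq> \<one>\<^bsub>G1\<^esub>" using nontriv u1 vT by simp
      show ?thesis by (rule core[OF vA _ _ uin vinv e1]) (use cav cbv iv in simp_all)
    qed
  qed
qed

end

lemma irrS_pxs:
  assumes "irrS p r G a b K" "r \<ge> 1"
  shows "pxs G a b r K"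
proof -
  obtain g: "group G" and fin: "finite (carrier G)" and ab: "a \<in> carrier G" "b \<in> carrier G"
    and gen: "carrier G = range (ev G a b)" and bb: "b \<otimes>\<^bsub>G\<^esub> b = \<one>\<^bsub>G\<^esub>" and K: "K \<lhd> G"
    and comm: "\<forall>x\<in>K. \<forall>y\<in>K. x \<otimes>\<^bsub>G\<^esub> y = y \<otimes>\<^bsub>G\<^esub> x"
    and u: "a \<otimes>\<^bsub>G\<^esub> a \<in> K" and v: "(a \<otimes>\<^bsub>G\<^esub> b) [^]\<^bsub>G\<^esub> r \<in> K"
    using assms(1) unfolding irrS_def by (elim conjE) (rule that; assumption)
  show ?thesis
    by (rule pxs.intro[OF g pxs_axioms.intro[OF ab bb fin gen K _ u v assms(2)]]) (use comm in blast)
qed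

lemma irrS_wgen: assumes "irrS p r G a b K" shows "wgen G a b"
  using assms unfolding irrS_def wgen_def by (elim conjE) (intro conjI; assumption)

lemma irrS_nontriv:
  assumes S: "irrS p r G a b K" and r: "r \<ge> 1"
  shows "\<not> (a \<otimes>\<^bsub>G\<^esub> a = \<one>\<^bsub>G\<^esub> \<and> (a \<otimes>\<^bsub>G\<^esub> b) [^]\<^bsub>G\<^esub> r = \<one>\<^bsub>G\<^esub>)"
proof
  interpret P: pxs G a b r K by (rule irrS_pxs[OF S r])
  assume h: "a \<otimes>\<^bsub>G\<^esub> a = \<one>\<^bsub>G\<^esub> \<and> (a \<otimes>\<^bsub>G\<^esub> b) [^]\<^bsub>G\<^esub> r = \<one>\<^bsub>G\<^esub>"
  have Kne: "K \<noteq> {\<one>\<^bsub>G\<^esub>}" and cG: "card (carrier G) = 2 * r * card K" using S by (auto simp: irrS_def)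
  have finK: "finite K" using P.pxs_fin P.A_sub finite_subset by auto
  obtain y where y: "y \<in> K" "y \<noteq> \<one>\<^bsub>G\<^esub>"
    using Kne P.A_subgroup subgroup.one_closed by fastforce
  have "{\<one>\<^bsub>G\<^esub>, y} \<subseteq> K" using y P.A_subgroup by (simp add: subgroup.one_closed)
  then have "card {\<one>\<^bsub>G\<^esub>, y} \<le> card K" using finK by (rule card_mono[rotated])
  then have cK: "card K \<ge> 2" using y by simp
  have "card (carrier G) \<le> 2 * r * card {\<one>\<^bsub>G\<^esub>}"
    using P.card_le_cover[OF P.pxs_fin P.pxs_gen P.pxs_ab P.pxs_bb P.one_is_normal] h r by simp
  then have "2 * r * card K \<le> 2 * r * 1" using cG by simp
  then show False using cK r by simp
qed

lemma U_full:
  fixes p :: nat and G1 :: "('a, 'c) monoid_scheme" and G2 :: "('b, 'd) monoid_scheme"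
  assumes S1: "irrS p r G1 a1 b1 K1" and S2: "irrS p r G2 a2 b2 K2" and podd: "odd p" and r: "r \<ge> 1"
    and tb: "bij_betw \<theta> K1 K2"
    and th: "\<And>y z. y \<in> K1 \<Longrightarrow> z \<in> K1 \<Longrightarrow> \<theta> (y \<otimes>\<^bsub>G1\<^esub> z) = \<theta> y \<otimes>\<^bsub>G2\<^esub> \<theta> z"
    and ta: "\<And>y. y \<in> K1 \<Longrightarrow> \<theta> (cj G1 a1 y) = cj G2 a2 (\<theta> y)"
    and tbb: "\<And>y. y \<in> K1 \<Longrightarrow> \<theta> (cj G1 b1 y) = cj G2 b2 (\<theta> y)"
  shows "rel G1 a1 b1 = rel G2 a2 b2"
proof
  interpret P1: pxs G1 a1 b1 r K1 by (rule irrS_pxs[OF S1 r])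
  interpret P2: pxs G2 a2 b2 r K2 by (rule irrS_pxs[OF S2 r])
  interpret X: tp G1 a1 b1 r K1 G2 a2 b2 K2 by (intro tp.intro irrS_pxs[OF S1 r] irrS_pxs[OF S2 r])
  interpret Y: tp G2 a2 b2 r K2 G1 a1 b1 K1 by (intro tp.intro irrS_pxs[OF S1 r] irrS_pxs[OF S2 r])
  have K1min: "\<And>L. L \<lhd> G1 \<Longrightarrow> L \<subseteq> K1 \<Longrightarrow> L = {\<one>\<^bsub>G1\<^esub>} \<or> L = K1"
    and K1ne: "K1 \<noteq> {\<one>\<^bsub>G1\<^esub>}" and cG1: "card (carrier G1) = 2 * r * card K1"
    and ex1: "\<And>y. y \<in> K1 \<Longrightarrow> y [^]\<^bsub>G1\<^esub> p = \<one>\<^bsub>G1\<^esub>"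
    using S1 by (auto simp: irrS_def)
  have K2min: "\<And>L. L \<lhd> G2 \<Longrightarrow> L \<subseteq> K2 \<Longrightarrow> L = {\<one>\<^bsub>G2\<^esub>} \<or> L = K2"
    and K2ne: "K2 \<noteq> {\<one>\<^bsub>G2\<^esub>}" and cG2: "card (carrier G2) = 2 * r * card K2"
    and ex2: "\<And>y. y \<in> K2 \<Longrightarrow> y [^]\<^bsub>G2\<^esub> p = \<one>\<^bsub>G2\<^esub>"
    using S2 by (auto simp: irrS_def)
  show "rel G1 a1 b1 \<subseteq> rel G2 a2 b2"
    by (rule X.U_half[OF K1min K2min K1ne cG1 ex1 ex2 podd tb th ta tbb])
  define \<theta>' where "\<theta>' = inv_into K1 \<theta>"
  have tinj: "inj_on \<theta> K1" and timg: "\<theta> ` K1 = K2" using tb by (auto simp: bij_betw_def)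
  have tb': "bij_betw \<theta>' K2 K1" unfolding \<theta>'_def by (rule bij_betw_inv_into[OF tb])
  have t'K: "\<theta>' z \<in> K1" and tt': "\<theta> (\<theta>' z) = z" if "z \<in> K2" for z
    using that timg unfolding \<theta>'_def by (auto intro: inv_into_into f_inv_into_f)
  have t't: "\<theta>' (\<theta> y) = y" if "y \<in> K1" for y
    using that tinj unfolding \<theta>'_def by (simp add: inv_into_f_f)
  have th': "\<theta>' (y \<otimes>\<^bsub>G2\<^esub> z) = \<theta>' y \<otimes>\<^bsub>G1\<^esub> \<theta>' z" if "y \<in> K2" "z \<in> K2" for y z
  proof -
    have "\<theta> (\<theta>' y \<otimes>\<^bsub>G1\<^esub> \<theta>' z) = y \<otimes>\<^bsub>G2\<^esub> z" using th[OF t'K t'K] that tt' by simp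
    moreover have "\<theta>' y \<otimes>\<^bsub>G1\<^esub> \<theta>' z \<in> K1" using t'K that P1.A_subgroup by (simp add: subgroup.m_closed)
    ultimately show ?thesis using t't by metis
  qed
  have ta': "\<theta>' (cj G2 a2 y) = cj G1 a1 (\<theta>' y)" if "y \<in> K2" for y
  proof -
    have "\<theta> (cj G1 a1 (\<theta>' y)) = cj G2 a2 y" using ta[OF t'K[OF that]] tt'[OF that] by simp
    moreover have "cj G1 a1 (\<theta>' y) \<in> K1" using P1.A_cj P1.pxs_ab t'K[OF that] by simp
    ultimately show ?thesis using t't by metis
  qed
  have tb'': "\<theta>' (cj G2 b2 y) = cj G1 b1 (\<theta>' y)" if "y \<in> K2" for y
  proof -
    have "\<theta> (cj G1 b1 (\<theta>' y)) = cj G2 b2 y" using tbb[OF t'K[OF that]] tt'[OF that] by simp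
    moreover have "cj G1 b1 (\<theta>' y) \<in> K1" using P1.A_cj P1.pxs_ab t'K[OF that] by simp
    ultimately show ?thesis using t't by metis
  qed
  show "rel G2 a2 b2 \<subseteq> rel G1 a1 b1"
    by (rule Y.U_half[OF K2min K1min K2ne cG2 ex2 ex1 podd tb' th' ta' tb''])
qed

context group
begin

lemma ev_concat_replicate:
  "a \<in> carrier G \<Longrightarrow> b \<in> carrier G \<Longrightarrow> ev G a b (concat (replicate n w)) = (ev G a b w) [^] n"
  by (induction n) (simp_all add: ev_append ev_closed nat_pow_Suc2[symmetric] del: nat_pow_Suc)

lemma ev_conjword:
  "a \<in> carrier G \<Longrightarrow> b \<in> carrier G \<Longrightarrow> ev G a b ([c] @ w @ winv [c]) = cj G (letter G a b c) (ev G a b w)"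
  by (simp add: ev_append ev_winv letter_closed ev_closed cj_def m_assoc)

end

definition wclosed :: "wrd set \<Rightarrow> bool" where
  "wclosed S \<longleftrightarrow> [] \<in> S \<and> (\<forall>w\<in>S. \<forall>w'\<in>S. w @ w' \<in> S) \<and> (\<forall>w\<in>S. winv w \<in> S) \<and>
     (\<forall>w\<in>S. [(False, False)] @ w @ winv [(False, False)] \<in> S) \<and>
     (\<forall>w\<in>S. [(True, False)] @ w @ winv [(True, False)] \<in> S)"

lemma (in group) word_normal:
  assumes fin: "finite (carrier G)" and gen: "carrier G = range (ev G a b)"
    and ab: "a \<in> carrier G" "b \<in> carrier G" and S: "wclosed S"
  shows "ev G a b ` S \<lhd> G"
proof (rule normal_from_gens[OF fin gen ab])
  show "subgroup (ev G a b ` S) G"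
  proof (rule subgroupI)
    show "ev G a b ` S \<subseteq> carrier G" using ab ev_closed by auto
    show "ev G a b ` S \<noteq> {}" using S by (auto simp: wclosed_def)
    show "inv y \<in> ev G a b ` S" if yS: "y \<in> ev G a b ` S" for y
    proof -
      obtain w where "w \<in> S" "y = ev G a b w" using yS by auto
      then show ?thesis using S ab by (auto simp: wclosed_def ev_winv[symmetric])
    qed
    show "y \<otimes> z \<in> ev G a b ` S" if yz: "y \<in> ev G a b ` S" "z \<in> ev G a b ` S" for y z
    proof -
      obtain w where w: "w \<in> S" "y = ev G a b w" using yz(1) by auto
      obtain w' where w': "w' \<in> S" "z = ev G a b w'" using yz(2) by auto
      have "y \<otimes> z = ev G a b (w @ w')" using w w' ab by (simp add: ev_append)
      then show ?thesis using S w w' by (auto simp: wclosed_def)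
    qed
  qed
  show "a \<otimes> l \<otimes> inv a \<in> ev G a b ` S" if lS: "l \<in> ev G a b ` S" for l
  proof -
    obtain w where w: "w \<in> S" "l = ev G a b w" using lS by auto
    have eq: "a \<otimes> l \<otimes> inv a = ev G a b ([(False, False)] @ w @ winv [(False, False)])"
      using w ab ev_conjword[OF ab, of "(False, False)" w] by (simp add: letter_def cj_def)
    have "[(False, False)] @ w @ winv [(False, False)] \<in> S" using S w by (simp add: wclosed_def)
    then show ?thesis using eq by (rule rev_image_eqI[where f="ev G a b"])
  qed
  show "b \<otimes> l \<otimes> inv b \<in> ev G a b ` S" if lS: "l \<in> ev G a b ` S" for l
  proof -
    obtain w where w: "w \<in> S" "l = ev G a b w" using lS by auto
    have eq: "b \<otimes> l \<otimes> inv b = ev G a b ([(True, False)] @ w @ winv [(True, False)])"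
      using w ab ev_conjword[OF ab, of "(True, False)" w] by (simp add: letter_def cj_def)
    have "[(True, False)] @ w @ winv [(True, False)] \<in> S" using S w by (simp add: wclosed_def)
    then show ?thesis using eq by (rule rev_image_eqI[where f="ev G a b"])
  qed
qed

lemma ex_transition:
  assumes "\<not> P (0::nat)" "P m"
  shows "\<exists>k<m. \<not> P k \<and> P (Suc k)"
  using assms
proof (induction m)
  case 0 then show ?case by simp
next
  case (Suc m)
  then show ?case by (cases "P m") (auto intro: less_SucI)
qed

lemma key_lemma:
  fixes p :: nat and G :: "nat \<Rightarrow> ('a, 'c) monoid_scheme" and a b :: "nat \<Rightarrow> 'a" and K :: "nat \<Rightarrow> 'a set"
    and GQ :: "('b, 'd) monoid_scheme"
  assumes SM: "\<And>i. i < m \<Longrightarrow> irrS p r (G i) (a i) (b i) (K i)"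
    and SQ: "irrS p r GQ aQ bQ KQ"
    and p: "Factorial_Ring.prime p" and podd: "odd p" and r: "r \<ge> 3" and pr: "\<not> p dvd r"
    and incl: "\<And>w. (\<forall>i<m. w \<in> rel (G i) (a i) (b i)) \<Longrightarrow> w \<in> rel GQ aQ bQ"
  shows "\<exists>i<m. rel (G i) (a i) (b i) = rel GQ aQ bQ"
proof -
  have r1: "r \<ge> 1" using r by simp
  have ndvd: "\<not> p dvd 2 * r"
  proof
    assume "p dvd 2 * r"
    then have "p dvd 2 \<or> p dvd r" using p by (simp add: prime_dvd_mult_iff)
    then have "p dvd 2" using pr by simp
    then have "p \<le> 2" by (simp add: dvd_imp_le)
    moreover have "p \<ge> 2" using p by (simp add: prime_ge_2_nat)
    ultimately show False using podd by simp
  qed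
  interpret Q: pxs GQ aQ bQ r KQ by (rule irrS_pxs[OF SQ r1])
  have PM: "pxs (G i) (a i) (b i) r (K i)" if "i < m" for i using irrS_pxs[OF SM[OF that] r1] .
  have grp: "group (G i)" if "i < m" for i using PM[OF that] by (simp add: pxs_def)
  have abi: "a i \<in> carrier (G i)" "b i \<in> carrier (G i)" if "i < m" for i
    using pxs.pxs_ab[OF PM[OF that]] by auto
  have Kn: "K i \<lhd> G i" if "i < m" for i using pxs.pxs_A[OF PM[OF that]] .
  have Ksub: "subgroup (K i) (G i)" if "i < m" for i using Kn[OF that] by (simp add: normal_imp_subgroup)
  have Kexp: "y [^]\<^bsub>G i\<^esub> p = \<one>\<^bsub>G i\<^esub>" if "i < m" "y \<in> K i" for i y
    using SM[OF that(1)] that(2) by (auto simp: irrS_def)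
  have evapp: "ev (G i) (a i) (b i) (w @ w') = ev (G i) (a i) (b i) w \<otimes>\<^bsub>G i\<^esub> ev (G i) (a i) (b i) w'"
    if "i < m" for i w w' using group.ev_append[OF grp[OF that] abi[OF that]] .
  have evinv: "ev (G i) (a i) (b i) (winv w) = inv\<^bsub>G i\<^esub> (ev (G i) (a i) (b i) w)"
    if "i < m" for i w using group.ev_winv[OF grp[OF that] abi[OF that]] .
  have evcj: "ev (G i) (a i) (b i) ([c] @ w @ winv [c]) = cj (G i) (letter (G i) (a i) (b i) c) (ev (G i) (a i) (b i) w)"
    if "i < m" for i c w using group.ev_conjword[OF grp[OF that] abi[OF that]] .
  have lcar: "letter (G i) (a i) (b i) c \<in> carrier (G i)" if "i < m" for i c
    using group.letter_closed[OF grp[OF that] abi[OF that]] .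
  define W where "W k = {w. \<forall>i<m. ev (G i) (a i) (b i) w \<in> K i \<and> (i < k \<longrightarrow> ev (G i) (a i) (b i) w = \<one>\<^bsub>G i\<^esub>)}" for k
  have Wcl: "wclosed (W k)" for k
    unfolding wclosed_def
  proof (intro conjI ballI)
    show "[] \<in> W k" unfolding W_def using Ksub by (simp add: subgroup.one_closed)
  next
    fix w w' assume w: "w \<in> W k" "w' \<in> W k"
    show "w @ w' \<in> W k" unfolding W_def
    proof (intro CollectI allI impI conjI)
      fix i assume i: "i < m"
      have e: "ev (G i) (a i) (b i) w \<in> K i" "ev (G i) (a i) (b i) w' \<in> K i"
        "i < k \<longrightarrow> ev (G i) (a i) (b i) w = \<one>\<^bsub>G i\<^esub>" "i < k \<longrightarrow> ev (G i) (a i) (b i) w' = \<one>\<^bsub>G i\<^esub>"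
        using w i by (auto simp: W_def)
      show "ev (G i) (a i) (b i) (w @ w') \<in> K i"
        using e Ksub[OF i] by (simp add: evapp[OF i] subgroup.m_closed)
      assume "i < k"
      then show "ev (G i) (a i) (b i) (w @ w') = \<one>\<^bsub>G i\<^esub>"
        using e evapp[OF i] monoid.l_one[OF group.is_monoid[OF grp[OF i]]]
          monoid.one_closed[OF group.is_monoid[OF grp[OF i]]] by simp
    qed
  next
    fix w assume w: "w \<in> W k"
    show "winv w \<in> W k" unfolding W_def
    proof (intro CollectI allI impI conjI)
      fix i assume i: "i < m"
      have e: "ev (G i) (a i) (b i) w \<in> K i" "i < k \<longrightarrow> ev (G i) (a i) (b i) w = \<one>\<^bsub>G i\<^esub>"
        using w i by (auto simp: W_def)
      show "ev (G i) (a i) (b i) (winv w) \<in> K i"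
        using e Ksub[OF i] by (simp add: evinv[OF i] subgroup.m_inv_closed)
      assume "i < k"
      then show "ev (G i) (a i) (b i) (winv w) = \<one>\<^bsub>G i\<^esub>"
        using e evinv[OF i] monoid.inv_one[OF group.is_monoid[OF grp[OF i]]] by simp
    qed
  next
    fix w assume w: "w \<in> W k"
    have gen: "[c] @ w @ winv [c] \<in> W k" for c
      unfolding W_def
    proof (intro CollectI allI impI conjI)
      fix i assume i: "i < m"
      have e: "ev (G i) (a i) (b i) w \<in> K i" "i < k \<longrightarrow> ev (G i) (a i) (b i) w = \<one>\<^bsub>G i\<^esub>"
        using w i by (auto simp: W_def)
      show "ev (G i) (a i) (b i) ([c] @ w @ winv [c]) \<in> K i"
        using e(1) Kn[OF i] lcar[OF i] evcj[OF i]
        by (simp add: normal.inv_op_closed2 cj_def)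
      assume "i < k"
      then show "ev (G i) (a i) (b i) ([c] @ w @ winv [c]) = \<one>\<^bsub>G i\<^esub>"
        using e evcj[OF i] group.cj_one[OF grp[OF i] lcar[OF i]] by simp
    qed
    show "[(False, False)] @ w @ winv [(False, False)] \<in> W k" by (rule gen)
    show "[(True, False)] @ w @ winv [(True, False)] \<in> W k" by (rule gen)
  qed
  define P where "P j \<longleftrightarrow> (\<forall>w\<in>W j. ev GQ aQ bQ w = \<one>\<^bsub>GQ\<^esub>)" for j
  have Pm: "P m"
    unfolding P_def
  proof
    fix w assume "w \<in> W m"
    then have "\<forall>i<m. w \<in> rel (G i) (a i) (b i)" by (auto simp: W_def rel_def)
    then show "ev GQ aQ bQ w = \<one>\<^bsub>GQ\<^esub>" using incl by (simp add: rel_def)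
  qed
  define uw :: wrd where "uw = [(False, False), (False, False)]"
  define vw :: wrd where "vw = concat (replicate r [(False, False), (True, False)])"
  have evu: "ev H x y uw = x \<otimes>\<^bsub>H\<^esub> x" if "group H" "x \<in> carrier H" for H :: "('e, 'f) monoid_scheme" and x y
    using that monoid.r_one[OF group.is_monoid[OF that(1)], of x] by (simp add: uw_def letter_def)
  have evv: "ev H x y vw = (x \<otimes>\<^bsub>H\<^esub> y) [^]\<^bsub>H\<^esub> r" if "group H" "x \<in> carrier H" "y \<in> carrier H" for H :: "('e, 'f) monoid_scheme" and x y
  proof -
    have "ev H x y [(False, False), (True, False)] = x \<otimes>\<^bsub>H\<^esub> y"
      using that monoid.r_one[OF group.is_monoid[OF that(1)], of y] by (simp add: letter_def)
    then show ?thesis unfolding vw_def using group.ev_concat_replicate[OF that(1) that(2) that(3)] by simp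
  qed
  have nP0: "\<not> P 0"
  proof
    assume P0: "P 0"
    have "uw \<in> W 0" unfolding W_def
      using evu[OF grp abi(1)] pxs.pxs_u[OF PM] by auto
    moreover have "vw \<in> W 0" unfolding W_def
      using evv[OF grp abi] pxs.pxs_v[OF PM] by auto
    ultimately have "ev GQ aQ bQ uw = \<one>\<^bsub>GQ\<^esub>" "ev GQ aQ bQ vw = \<one>\<^bsub>GQ\<^esub>" using P0 by (auto simp: P_def)
    then have "aQ \<otimes>\<^bsub>GQ\<^esub> aQ = \<one>\<^bsub>GQ\<^esub>" "(aQ \<otimes>\<^bsub>GQ\<^esub> bQ) [^]\<^bsub>GQ\<^esub> r = \<one>\<^bsub>GQ\<^esub>"
      using evu[OF Q.is_group Q.pxs_ab(1)] evv[OF Q.is_group Q.pxs_ab] by auto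
    then show False using irrS_nontriv[OF SQ r1] by simp
  qed
  obtain k where k: "k < m" "\<not> P k" "P (Suc k)" using ex_transition[of P m, OF nP0 Pm] by blast
  interpret Pk: pxs "G k" "a k" "b k" r "K k" by (rule PM[OF k(1)])
  define evk where "evk = ev (G k) (a k) (b k)"
  define evQ where "evQ = ev GQ aQ bQ"
  have Kkmin: "\<And>L. L \<lhd> G k \<Longrightarrow> L \<subseteq> K k \<Longrightarrow> L = {\<one>\<^bsub>G k\<^esub>} \<or> L = K k"
    using SM[OF k(1)] by (auto simp: irrS_def)
  have KQmin: "\<And>L. L \<lhd> GQ \<Longrightarrow> L \<subseteq> KQ \<Longrightarrow> L = {\<one>\<^bsub>GQ\<^esub>} \<or> L = KQ"
    using SQ by (auto simp: irrS_def)
  have cQ: "card (carrier GQ) = 2 * r * card KQ" using SQ by (auto simp: irrS_def)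
  have WSuc: "w \<in> W (Suc k)" if "w \<in> W k" "evk w = \<one>\<^bsub>G k\<^esub>" for w
    using that by (auto simp: W_def evk_def less_Suc_eq)
  have wd: "evQ w = evQ w'" if w: "w \<in> W k" "w' \<in> W k" "evk w = evk w'" for w w'
  proof -
    have "winv w' @ w \<in> W k" using Wcl[of k] w by (simp add: wclosed_def)
    moreover have "evk (winv w' @ w) = \<one>\<^bsub>G k\<^esub>"
      using Pk.ev_eq_iff[OF Pk.pxs_ab] w(3) by (simp add: evk_def)
    ultimately have "winv w' @ w \<in> W (Suc k)" by (rule WSuc)
    then have "evQ (winv w' @ w) = \<one>\<^bsub>GQ\<^esub>" using k(3) by (simp add: P_def evQ_def)
    then show ?thesis using Q.ev_eq_iff[OF Q.pxs_ab] by (simp add: evQ_def)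
  qed
  define \<theta> where "\<theta> y = evQ (SOME w. w \<in> W k \<and> evk w = y)" for y
  have \<theta>ev: "\<theta> (evk w) = evQ w" if "w \<in> W k" for w
  proof -
    have ex: "\<exists>w'. w' \<in> W k \<and> evk w' = evk w" using that by blast
    have "(SOME w'. w' \<in> W k \<and> evk w' = evk w) \<in> W k \<and> evk (SOME w'. w' \<in> W k \<and> evk w' = evk w) = evk w"
      by (rule someI_ex[OF ex])
    then show ?thesis unfolding \<theta>_def using wd that by blast
  qed
  have Ekn: "evk ` W k \<lhd> G k" unfolding evk_def by (rule Pk.word_normal[OF Pk.pxs_fin Pk.pxs_gen Pk.pxs_ab Wcl])
  have EkK: "evk ` W k \<subseteq> K k" using k(1) by (auto simp: W_def evk_def)
  have Ekne: "evk ` W k \<noteq> {\<one>\<^bsub>G k\<^esub>}"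
  proof
    assume h: "evk ` W k = {\<one>\<^bsub>G k\<^esub>}"
    have "P k" unfolding P_def
    proof
      fix w assume w: "w \<in> W k"
      then have "evk w = \<one>\<^bsub>G k\<^esub>" using h by blast
      then have "w \<in> W (Suc k)" using WSuc w by simp
      then show "ev GQ aQ bQ w = \<one>\<^bsub>GQ\<^esub>" using k(3) by (simp add: P_def)
    qed
    then show False using k(2) by simp
  qed
  have EkEq: "evk ` W k = K k" using Kkmin[OF Ekn EkK] Ekne by simp
  have KkW: "\<exists>w\<in>W k. y = evk w" if "y \<in> K k" for y using that EkEq by blast
  have FQn: "evQ ` W k \<lhd> GQ" unfolding evQ_def by (rule Q.word_normal[OF Q.pxs_fin Q.pxs_gen Q.pxs_ab Wcl])
  have FQK: "evQ ` W k \<subseteq> KQ"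
  proof
    fix z assume "z \<in> evQ ` W k"
    then obtain w where w: "w \<in> W k" "z = evQ w" by auto
    have "\<forall>i<m. concat (replicate p w) \<in> rel (G i) (a i) (b i)"
    proof (intro allI impI)
      fix i assume i: "i < m"
      have "ev (G i) (a i) (b i) w \<in> K i" using w i by (simp add: W_def)
      then show "concat (replicate p w) \<in> rel (G i) (a i) (b i)"
        using group.ev_concat_replicate[OF grp[OF i] abi[OF i]] Kexp[OF i] by (simp add: rel_def)
    qed
    then have "evQ (concat (replicate p w)) = \<one>\<^bsub>GQ\<^esub>" using incl by (simp add: rel_def evQ_def)
    then have "z [^]\<^bsub>GQ\<^esub> p = \<one>\<^bsub>GQ\<^esub>" using w Q.ev_concat_replicate[OF Q.pxs_ab] by (simp add: evQ_def)
    moreover have "z \<in> carrier GQ" using w Q.ev_closed[OF Q.pxs_ab] by (simp add: evQ_def)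
    ultimately show "z \<in> KQ" using Q.pelem_in_normal[OF Q.pxs_fin Q.pxs_A cQ p ndvd] by simp
  qed
  have FQne: "evQ ` W k \<noteq> {\<one>\<^bsub>GQ\<^esub>}"
  proof
    assume h: "evQ ` W k = {\<one>\<^bsub>GQ\<^esub>}"
    have "P k" unfolding P_def using h by (auto simp: evQ_def)
    then show False using k(2) by simp
  qed
  have FQEq: "evQ ` W k = KQ" using KQmin[OF FQn FQK] FQne by simp
  have timg: "\<theta> ` K k = KQ"
  proof -
    have "\<theta> ` K k = \<theta> ` (evk ` W k)" using EkEq by simp
    also have "\<dots> = evQ ` W k" using \<theta>ev by (force simp: image_iff)
    finally show ?thesis using FQEq by simp
  qed
  define Z where "Z = evk ` {w \<in> W k. evQ w = \<one>\<^bsub>GQ\<^esub>}"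
  have Zcl: "wclosed {w \<in> W k. evQ w = \<one>\<^bsub>GQ\<^esub>}"
    using Wcl[of k] unfolding wclosed_def
    by (auto simp: evQ_def Q.ev_append[OF Q.pxs_ab] Q.ev_winv[OF Q.pxs_ab] Q.ev_conjword[OF Q.pxs_ab]
        Q.letter_closed[OF Q.pxs_ab] simp del: append.simps)
  have Zn: "Z \<lhd> G k" unfolding Z_def evk_def by (rule Pk.word_normal[OF Pk.pxs_fin Pk.pxs_gen Pk.pxs_ab Zcl])
  have ZK: "Z \<subseteq> K k" using EkK by (auto simp: Z_def)
  have Zne: "Z \<noteq> K k"
  proof
    assume h: "Z = K k"
    have "P k" unfolding P_def
    proof
      fix w assume w: "w \<in> W k"
      then have "evk w \<in> Z" using h EkK by auto
      then obtain w' where w': "w' \<in> W k" "evQ w' = \<one>\<^bsub>GQ\<^esub>" "evk w' = evk w" by (auto simp: Z_def)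
      then show "ev GQ aQ bQ w = \<one>\<^bsub>GQ\<^esub>" using wd[OF w'(1) w w'(3)] by (simp add: evQ_def)
    qed
    then show False using k(2) by simp
  qed
  have Z1: "Z = {\<one>\<^bsub>G k\<^esub>}" using Kkmin[OF Zn ZK] Zne by simp
  have tinj: "inj_on \<theta> (K k)"
  proof (rule inj_onI)
    fix y y' assume y: "y \<in> K k" "y' \<in> K k" "\<theta> y = \<theta> y'"
    obtain w where w: "w \<in> W k" "y = evk w" using KkW[OF y(1)] by blast
    obtain w' where w': "w' \<in> W k" "y' = evk w'" using KkW[OF y(2)] by blast
    have "evQ w = evQ w'" using y(3) w w' \<theta>ev by simp
    then have q1: "evQ (winv w' @ w) = \<one>\<^bsub>GQ\<^esub>" using Q.ev_eq_iff[OF Q.pxs_ab] by (simp add: evQ_def)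
    have "winv w' @ w \<in> W k" using Wcl[of k] w w' by (simp add: wclosed_def)
    then have "evk (winv w' @ w) \<in> Z" using q1 by (auto simp: Z_def)
    then have "evk (winv w' @ w) = \<one>\<^bsub>G k\<^esub>" using Z1 by simp
    then have "evk w = evk w'" using Pk.ev_eq_iff[OF Pk.pxs_ab] by (simp add: evk_def)
    then show "y = y'" using w w' by simp
  qed
  have tb: "bij_betw \<theta> (K k) KQ" using tinj timg by (simp add: bij_betw_def)
  have th: "\<theta> (y \<otimes>\<^bsub>G k\<^esub> z) = \<theta> y \<otimes>\<^bsub>GQ\<^esub> \<theta> z" if yz: "y \<in> K k" "z \<in> K k" for y z
  proof -
    obtain w where w: "w \<in> W k" "y = evk w" using KkW[OF yz(1)] by blast
    obtain w' where w': "w' \<in> W k" "z = evk w'" using KkW[OF yz(2)] by blast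
    have "w @ w' \<in> W k" using Wcl[of k] w w' by (simp add: wclosed_def)
    moreover have "y \<otimes>\<^bsub>G k\<^esub> z = evk (w @ w')" using w w' Pk.ev_append[OF Pk.pxs_ab] by (simp add: evk_def)
    ultimately have "\<theta> (y \<otimes>\<^bsub>G k\<^esub> z) = evQ (w @ w')" using \<theta>ev by simp
    also have "\<dots> = evQ w \<otimes>\<^bsub>GQ\<^esub> evQ w'" using Q.ev_append[OF Q.pxs_ab] by (simp add: evQ_def)
    finally show ?thesis using w w' \<theta>ev by simp
  qed
  have tcj: "\<theta> (cj (G k) (letter (G k) (a k) (b k) c) y) = cj GQ (letter GQ aQ bQ c) (\<theta> y)"
    if yK: "y \<in> K k" and c: "c = (False, False) \<or> c = (True, False)" for y c
  proof -
    obtain w where w: "w \<in> W k" "y = evk w" using KkW[OF yK] by blast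
    have "[c] @ w @ winv [c] \<in> W k"
      using c Wcl[of k] w(1) unfolding wclosed_def by blast
    moreover have "cj (G k) (letter (G k) (a k) (b k) c) y = evk ([c] @ w @ winv [c])"
      using w Pk.ev_conjword[OF Pk.pxs_ab] by (simp add: evk_def)
    ultimately have "\<theta> (cj (G k) (letter (G k) (a k) (b k) c) y) = evQ ([c] @ w @ winv [c])" using \<theta>ev by simp
    also have "\<dots> = cj GQ (letter GQ aQ bQ c) (evQ w)" using Q.ev_conjword[OF Q.pxs_ab] by (simp add: evQ_def)
    finally show ?thesis using w \<theta>ev by simp
  qed
  have ta: "\<theta> (cj (G k) (a k) y) = cj GQ aQ (\<theta> y)" if "y \<in> K k" for y
    using tcj[OF that, of "(False, False)"] by (simp add: letter_def)
  have tbb: "\<theta> (cj (G k) (b k) y) = cj GQ bQ (\<theta> y)" if "y \<in> K k" for y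
    using tcj[OF that, of "(True, False)"] by (simp add: letter_def)
  have "rel (G k) (a k) (b k) = rel GQ aQ bQ"
    by (rule U_full[OF SM[OF k(1)] SQ podd r1 tb th ta tbb])
  then show ?thesis using k(1) by blast
qed

lemma rmap_iso_iff_rel':
  assumes "wgen (fst XX) (fst (snd XX)) (snd (snd XX))" "wgen (fst YY) (fst (snd YY)) (snd (snd YY))"
  shows "rmap_iso XX YY \<longleftrightarrow> rel (fst XX) (fst (snd XX)) (snd (snd XX)) = rel (fst YY) (fst (snd YY)) (snd (snd YY))"
proof -
  obtain G a b where XX: "XX = (G, a, b)" by (cases XX) auto
  obtain G' a' b' where YY: "YY = (G', a', b')" by (cases YY) auto
  show ?thesis using rmap_iso_iff_rel[of G a b G' a' b'] assms by (simp add: XX YY)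
qed

theorem theorem6p8:
  fixes p r m n :: nat
    and M :: "nat \<Rightarrow> 'a rmap" and N :: "nat \<Rightarrow> 'b rmap"
  assumes "Factorial_Ring.prime p" and "odd p" and "r \<ge> 3" and "\<not> p dvd r"
    and "m \<ge> 1" and "n \<ge> 1"
    and "\<forall>i<m. irreducible_rotary_augmented_PX_map p r (M i)"
    and "\<forall>i<n. irreducible_rotary_augmented_PX_map p r (N i)"
    and "\<forall>i<m. \<forall>j<m. i \<noteq> j \<longrightarrow> \<not> rmap_iso (M i) (M j)"
    and "\<forall>i<n. \<forall>j<n. i \<noteq> j \<longrightarrow> \<not> rmap_iso (N i) (N j)"
  shows "rmap_iso (rmap_prod m M) (rmap_prod n N) \<longleftrightarrow>
           (m = n \<and> (\<exists>\<sigma>. bij_betw \<sigma> {..<n} {..<n} \<and> (\<forall>i<n. rmap_iso (M i) (N (\<sigma> i)))))"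
proof -
  note p = assms(1) and podd = assms(2) and r = assms(3) and pr = assms(4)
  note irrM = assms(7) and irrN = assms(8) and distM = assms(9) and distN = assms(10)
  have ex_KM: "\<forall>i. \<exists>K. i < m \<longrightarrow> irrS p r (fst (M i)) (fst (snd (M i))) (snd (snd (M i))) K"
  proof
    fix i
    show "\<exists>K. i < m \<longrightarrow> irrS p r (fst (M i)) (fst (snd (M i))) (snd (snd (M i))) K"
    proof (cases "i < m")
      case True
      have "irreducible_rotary_augmented_PX_map p r (fst (M i), fst (snd (M i)), snd (snd (M i)))"
        using irrM True by simp
      then have "\<exists>K. irrS p r (fst (M i)) (fst (snd (M i))) (snd (snd (M i))) K"
        by (rule irr_to_irrS[OF _ p podd r pr])
      then show ?thesis by blast
    qed simp
  qed
  obtain KM where KM: "\<And>i. i < m \<Longrightarrow> irrS p r (fst (M i)) (fst (snd (M i))) (snd (snd (M i))) (KM i)"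
    using choice[OF ex_KM] by blast
  have ex_KN: "\<forall>i. \<exists>K. i < n \<longrightarrow> irrS p r (fst (N i)) (fst (snd (N i))) (snd (snd (N i))) K"
  proof
    fix i
    show "\<exists>K. i < n \<longrightarrow> irrS p r (fst (N i)) (fst (snd (N i))) (snd (snd (N i))) K"
    proof (cases "i < n")
      case True
      have "irreducible_rotary_augmented_PX_map p r (fst (N i), fst (snd (N i)), snd (snd (N i)))"
        using irrN True by simp
      then have "\<exists>K. irrS p r (fst (N i)) (fst (snd (N i))) (snd (snd (N i))) K"
        by (rule irr_to_irrS[OF _ p podd r pr])
      then show ?thesis by blast
    qed simp
  qed
  obtain KN where KN: "\<And>i. i < n \<Longrightarrow> irrS p r (fst (N i)) (fst (snd (N i))) (snd (snd (N i))) (KN i)"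
    using choice[OF ex_KN] by blast
  define relM where "relM i = rel (fst (M i)) (fst (snd (M i))) (snd (snd (M i)))" for i
  define relN where "relN j = rel (fst (N j)) (fst (snd (N j))) (snd (snd (N j)))" for j
  have wM: "wgen (fst (M i)) (fst (snd (M i))) (snd (snd (M i)))" if "i < m" for i
    using irrS_wgen[OF KM[OF that]] .
  have wN: "wgen (fst (N i)) (fst (snd (N i))) (snd (snd (N i)))" if "i < n" for i
    using irrS_wgen[OF KN[OF that]] .
  have isoMN: "rmap_iso (M i) (N j) \<longleftrightarrow> relM i = relN j" if "i < m" "j < n" for i j
    using rmap_iso_iff_rel'[OF wM[OF that(1)] wN[OF that(2)]] by (simp add: relM_def relN_def)
  have isoMM: "rmap_iso (M i) (M j) \<longleftrightarrow> relM i = relM j" if "i < m" "j < m" for i j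
    using rmap_iso_iff_rel'[OF wM[OF that(1)] wM[OF that(2)]] by (simp add: relM_def)
  have isoNN: "rmap_iso (N i) (N j) \<longleftrightarrow> relN i = relN j" if "i < n" "j < n" for i j
    using rmap_iso_iff_rel'[OF wN[OF that(1)] wN[OF that(2)]] by (simp add: relN_def)
  have prodiso: "rmap_iso (rmap_prod m M) (rmap_prod n N) \<longleftrightarrow>
      {w. \<forall>i<m. w \<in> relM i} = {w. \<forall>j<n. w \<in> relN j}"
    using rmap_iso_iff_rel'[OF rmap_prod_props(1)[OF wM] rmap_prod_props(1)[OF wN]]
      rmap_prod_props(2)[OF wM] rmap_prod_props(2)[OF wN]
    by (simp add: relM_def relN_def)
  show ?thesis
  proof
    assume "rmap_iso (rmap_prod m M) (rmap_prod n N)"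
    then have eq: "{w. \<forall>i<m. w \<in> relM i} = {w. \<forall>j<n. w \<in> relN j}" using prodiso by simp
    have fM: "\<exists>j<n. relM i = relN j" if i: "i < m" for i
    proof -
      have "\<exists>j<n. rel (fst (N j)) (fst (snd (N j))) (snd (snd (N j))) = rel (fst (M i)) (fst (snd (M i))) (snd (snd (M i)))"
      proof (rule key_lemma[OF KN KM[OF i] p podd r pr])
        fix w assume "\<forall>j<n. w \<in> rel (fst (N j)) (fst (snd (N j))) (snd (snd (N j)))"
        then have "w \<in> {w. \<forall>j<n. w \<in> relN j}" by (simp add: relN_def)
        then have "w \<in> {w. \<forall>i<m. w \<in> relM i}" using eq by simp
        then show "w \<in> rel (fst (M i)) (fst (snd (M i))) (snd (snd (M i)))" using i by (simp add: relM_def)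
      qed
      then show ?thesis by (auto simp: relM_def relN_def)
    qed
    have fN: "\<exists>i<m. relM i = relN j" if j: "j < n" for j
    proof -
      have "\<exists>i<m. rel (fst (M i)) (fst (snd (M i))) (snd (snd (M i))) = rel (fst (N j)) (fst (snd (N j))) (snd (snd (N j)))"
      proof (rule key_lemma[OF KM KN[OF j] p podd r pr])
        fix w assume "\<forall>i<m. w \<in> rel (fst (M i)) (fst (snd (M i))) (snd (snd (M i)))"
        then have "w \<in> {w. \<forall>i<m. w \<in> relM i}" by (simp add: relM_def)
        then have "w \<in> {w. \<forall>j<n. w \<in> relN j}" using eq by simp
        then show "w \<in> rel (fst (N j)) (fst (snd (N j))) (snd (snd (N j)))" using j by (simp add: relN_def)
      qed
      then show ?thesis by (auto simp: relM_def relN_def)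
    qed
    define f where "f i = (SOME j. j < n \<and> relM i = relN j)" for i
    have f: "f i < n \<and> relM i = relN (f i)" if "i < m" for i
      unfolding f_def using someI_ex[OF fM[OF that]] by blast
    define g where "g j = (SOME i. i < m \<and> relM i = relN j)" for j
    have g: "g j < m \<and> relM (g j) = relN j" if "j < n" for j
      unfolding g_def using someI_ex[OF fN[OF that]] by blast
    have finj: "inj_on f {..<m}"
    proof (rule inj_onI)
      fix i i' assume "i \<in> {..<m}" "i' \<in> {..<m}" "f i = f i'"
      then have "relM i = relM i'" "i < m" "i' < m" using f by auto
      then show "i = i'" using distM isoMM by blast
    qed
    have ginj: "inj_on g {..<n}"
    proof (rule inj_onI)
      fix j j' assume h: "j \<in> {..<n}" "j' \<in> {..<n}" "g j = g j'"
      have jn: "j < n" "j' < n" using h by auto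
      have "relN j = relM (g j)" using g[OF jn(1)] by simp
      also have "\<dots> = relM (g j')" using h by simp
      also have "\<dots> = relN j'" using g[OF jn(2)] by simp
      finally show "j = j'" using distN isoNN jn by blast
    qed
    have "m \<le> n" using card_inj_on_le[OF finj, of "{..<n}"] f by auto
    moreover have "n \<le> m" using card_inj_on_le[OF ginj, of "{..<m}"] g by auto
    ultimately have mn: "m = n" by simp
    have fimg: "f ` {..<n} \<subseteq> {..<n}" using f mn by auto
    have "f ` {..<n} = {..<n}" using endo_inj_surj[OF _ fimg] finj mn by simp
    then have bij: "bij_betw f {..<n} {..<n}" using finj mn by (simp add: bij_betw_def)
    have "\<forall>i<n. rmap_iso (M i) (N (f i))" using f isoMN mn by simp
    then show "m = n \<and> (\<exists>\<sigma>. bij_betw \<sigma> {..<n} {..<n} \<and> (\<forall>i<n. rmap_iso (M i) (N (\<sigma> i))))"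
      using mn bij by blast
  next
    assume h: "m = n \<and> (\<exists>\<sigma>. bij_betw \<sigma> {..<n} {..<n} \<and> (\<forall>i<n. rmap_iso (M i) (N (\<sigma> i))))"
    then have mn: "m = n" by simp
    obtain \<sigma> where \<sigma>: "bij_betw \<sigma> {..<n} {..<n}" "\<forall>i<n. rmap_iso (M i) (N (\<sigma> i))" using h by blast
    have s_lt: "\<sigma> i < n" if "i < n" for i using \<sigma>(1) that by (auto simp: bij_betw_def)
    have rs: "relM i = relN (\<sigma> i)" if "i < n" for i using \<sigma>(2) isoMN[of i "\<sigma> i"] that s_lt mn by simp
    have "{w. \<forall>i<m. w \<in> relM i} = {w. \<forall>j<n. w \<in> relN j}"
    proof (intro Set.set_eqI iffI; simp)
      fix w assume w: "\<forall>i<m. w \<in> relM i"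
      show "\<forall>j<n. w \<in> relN j"
      proof (intro allI impI)
        fix j assume j: "j < n"
        then obtain i where "i < n" "j = \<sigma> i" using \<sigma>(1) by (auto simp: bij_betw_def image_iff)
        then show "w \<in> relN j" using w rs mn by auto
      qed
    next
      fix w assume w: "\<forall>j<n. w \<in> relN j"
      show "\<forall>i<m. w \<in> relM i" using w rs s_lt mn by auto
    qed
    then show "rmap_iso (rmap_prod m M) (rmap_prod n N)" using prodiso by simp
  qed
qed

end
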